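(* For a flat virtual braid $\beta\in FVB_n$ let $G(\beta)$ be the quotient of the free group $F_{2n}$ with free basis $x_1,\dots,x_n,y_1,\dots,y_n$ by the relations $\theta(\beta)(x_i)=x_i$, $\theta(\beta)(y_i)=y_i$ ($i=1,\dots,n$) together with the relations $y_1=y_2=\dots=y_n$. Then $G(\beta)$ depends (up to isomorphism) not on the braid $\beta$ but only on its closure $\widehat\beta$: if $\beta\in FVB_n$ and $\beta'\in FVB_{n'}$ have equivalent closures, then $G(\beta)\cong G(\beta')$.
   Context: $FVB_n$ is the flat virtual braid group: generators $\sigma_1,\dots,\sigma_{n-1},\rho_1,\dots,\rho_{n-1}$, relations $\sigma_i\sigma_j=\sigma_j\sigma_i$, $\rho_i\rho_j=\rho_j\rho_i$, $\sigma_i\rho_j=\rho_j\sigma_i$ for $|i-j|\ge2$; $\sigma_i\sigma_{i+1}\sigma_i=\sigma_{i+1}\sigma_i\sigma_{i+1}$; $\rho_i\rho_{i+1}\rho_i=\rho_{i+1}\rho_i\rho_{i+1}$; $\rho_i\rho_{i+1}\sigma_i=\sigma_{i+1}\rho_i\rho_{i+1}$; $\rho_i^2=\sigma_i^2=1$. $\theta:FVB_n\to{\rm Aut}(F_{2n})$ is the homomorphism with $\theta(\sigma_i):x_i\mapsto x_{i+1}y_{i+1},\ x_{i+1}\mapsto x_iy_{i+1}^{-1}$ and $\theta(\rho_i):x_i\leftrightarrow x_{i+1},\ y_i\leftrightarrow y_{i+1}$ (other generators fixed), automorphisms composed on the right, $(fg)(x)=g(f(x))$. The closure $\widehat\beta$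 of a flat virtual braid is the flat virtual link diagram obtained by joining the top and bottom endpoints of its strands (flat crossings for $\sigma_i$, virtual crossings for $\rho_i$), and closures are compared up to equivalence of flat virtual links. *)

theory Defs
  imports "HOL-Algebra.Algebra" "HOL-Library.Multiset"
begin

text \<open>Letters of words in the generators of FVB_n: S i is sigma_i, R i is rho_i (1 <= i <= n-1).
  Every element of FVB_n is represented by such a word (all generators are involutions).\<close>
datatype fvgen = S nat | R nat

fun gidx :: "fvgen \<Rightarrow> nat" where
  "gidx (S i) = i" | "gidx (R i) = i"

definition fvb_word :: "nat \<Rightarrow> fvgen list \<Rightarrow> bool" where
  "fvb_word n w \<longleftrightarrow> (\<forall>g\<in>set w. 1 \<le> gidx g \<and> gidx g < n)"

text \<open>A letter (a, e) is the generator a if e = False and its inverse if e = True.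
  Generators: Inl i = x_i, Inr i = y_i.\<close>
type_synonym 'a fletter = "'a \<times> bool"

fun freduce :: "'a fletter list \<Rightarrow> 'a fletter list" where
  "freduce [] = []"
| "freduce (a # w) = (case freduce w of
      [] \<Rightarrow> [a]
    | b # v \<Rightarrow> (if fst b = fst a \<and> snd b \<noteq> snd a then v else a # b # v))"

definition finv :: "'a fletter list \<Rightarrow> 'a fletter list" where
  "finv u = rev (map (\<lambda>(a, e). (a, \<not> e)) u)"

definition free_group :: "'a set \<Rightarrow> ('a fletter list) monoid" where
  "free_group A = \<lparr> partial_object.carrier = {w. freduce w = w \<and> (\<forall>l\<in>set w. fst l \<in> A)},
                    monoid.mult = (\<lambda>u v. freduce (u @ v)), monoid.one = [] \<rparr>"

definition fsubst :: "('a \<Rightarrow> 'b fletter list) \<Rightarrow> 'a fletter list \<Rightarrow> 'b fletter list" where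
  "fsubst f w = freduce (concat (map (\<lambda>(a, e). if e then finv (f a) else f a) w))"

definition swp :: "nat \<Rightarrow> nat \<Rightarrow> nat" where
  "swp i j = (if j = i then i + 1 else if j = i + 1 then i else j)"

fun theta_gen :: "fvgen \<Rightarrow> (nat + nat) \<Rightarrow> (nat + nat) fletter list" where
  "theta_gen (S i) (Inl j) =
     (if j = i then [(Inl (i+1), False), (Inr (i+1), False)]
      else if j = i + 1 then [(Inl i, False), (Inr (i+1), True)]
      else [(Inl j, False)])"
| "theta_gen (S i) (Inr j) = [(Inr j, False)]"
| "theta_gen (R i) (Inl j) = [(Inl (swp i j), False)]"
| "theta_gen (R i) (Inr j) = [(Inr (swp i j), False)]"

text \<open>theta(beta)(g) for a braid word; automorphisms composed on the right: (fg)(x) = g(f(x)).\<close>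
definition theta :: "fvgen list \<Rightarrow> (nat + nat) \<Rightarrow> (nat + nat) fletter list" where
  "theta w g = foldl (\<lambda>u h. fsubst (theta_gen h) u) [(g, False)] w"

definition gens :: "nat \<Rightarrow> (nat + nat) set" where
  "gens n = Inl ` {1..n} \<union> Inr ` {1..n}"

definition relators :: "nat \<Rightarrow> fvgen list \<Rightarrow> (nat + nat) fletter list set" where
  "relators n w =
     (\<lambda>i. freduce (theta w (Inl i) @ [(Inl i, True)])) ` {1..n}
   \<union> (\<lambda>i. freduce (theta w (Inr i) @ [(Inr i, True)])) ` {1..n}
   \<union> (\<lambda>i. freduce [(Inr 1, False), (Inr i, True)]) ` {1..n}"

definition normal_closure :: "('a, 'b) monoid_scheme \<Rightarrow> 'a set \<Rightarrow> 'a set" where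
  "normal_closure G A = generate G (\<Union>g\<in>carrier G. (\<lambda>r. g \<otimes>\<^bsub>G\<^esub> r \<otimes>\<^bsub>G\<^esub> inv\<^bsub>G\<^esub> g) ` A)"

definition Gb :: "nat \<Rightarrow> fvgen list \<Rightarrow> ((nat + nat) fletter list) set monoid" where
  "Gb n w = free_group (gens n) Mod normal_closure (free_group (gens n)) (relators n w)"

text \<open>A flat Gauss diagram: one cyclic word per component; an endpoint (k, h) is an endpoint of
  chord k, h = True for the head of the arrow.\<close>
type_synonym endpt = "nat \<times> bool"
type_synonym gdiag = "endpt list list"

definition labels :: "gdiag \<Rightarrow> nat set" where
  "labels D = fst ` (\<Union>c\<in>set D. set c)"

text \<open>Realisable triangle configurations for R3 (lines 1,2,3; chords a=c12, b=c13, c=c23),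
  with line i reversed according to e_i.\<close>
definition flipif :: "bool \<Rightarrow> endpt \<Rightarrow> endpt" where
  "flipif f p = (fst p, snd p \<noteq> f)"

definition r3cfg :: "bool \<Rightarrow> bool \<Rightarrow> bool \<Rightarrow> nat \<Rightarrow> nat \<Rightarrow> nat \<Rightarrow> endpt list list" where
  "r3cfg e1 e2 e3 a b c =
    (let fa = (e1 \<noteq> e2); fb = (e1 \<noteq> e3); fc = (e2 \<noteq> e3);
         rv = (\<lambda>e s. if e then rev s else s) in
     [rv e1 [flipif fb (b, True), flipif fa (a, False)],
      rv e2 [flipif fa (a, True), flipif fc (c, False)],
      rv e3 [flipif fc (c, True), flipif fb (b, False)]])"

inductive gstep :: "gdiag \<Rightarrow> gdiag \<Rightarrow> bool" where
  rotate: "gstep ((u @ v) # rest) ((v @ u) # rest)"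
| permute: "mset D' = mset D \<Longrightarrow> gstep D D'"
| relabel: "inj f \<Longrightarrow> gstep D (map (map (\<lambda>(k, h). (f k, h))) D)"
| R1: "k \<notin> labels (w # rest) \<Longrightarrow>
       gstep (w # rest) (([(k, x), (k, \<not> x)] @ w) # rest)"
| R2a: "a \<noteq> b \<Longrightarrow> a \<notin> labels D \<Longrightarrow> b \<notin> labels D \<Longrightarrow> D = w1 # w2 # rest \<Longrightarrow>
       s2 \<in> {[(a, \<not> x), (b, x)], [(b, x), (a, \<not> x)]} \<Longrightarrow>
       gstep D (([(a, x), (b, \<not> x)] @ w1) # (s2 @ w2) # rest)"
| R2b: "a \<noteq> b \<Longrightarrow> a \<notin> labels D \<Longrightarrow> b \<notin> labels D \<Longrightarrow> D = (w1 @ w2) # rest \<Longrightarrow>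
       s2 \<in> {[(a, \<not> x), (b, x)], [(b, x), (a, \<not> x)]} \<Longrightarrow>
       gstep D (([(a, x), (b, \<not> x)] @ w1 @ s2 @ w2) # rest)"
| R3a: "distinct [a, b, c] \<Longrightarrow> distinct [i, j, k] \<Longrightarrow> i < 3 \<Longrightarrow> j < 3 \<Longrightarrow> k < 3 \<Longrightarrow>
       cf = r3cfg e1 e2 e3 a b c \<Longrightarrow>
       gstep ((cf!i @ w1 @ cf!j @ w2 @ cf!k @ w3) # rest)
             ((rev (cf!i) @ w1 @ rev (cf!j) @ w2 @ rev (cf!k) @ w3) # rest)"
| R3b: "distinct [a, b, c] \<Longrightarrow> distinct [i, j, k] \<Longrightarrow> i < 3 \<Longrightarrow> j < 3 \<Longrightarrow> k < 3 \<Longrightarrow>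
       cf = r3cfg e1 e2 e3 a b c \<Longrightarrow>
       gstep ((cf!i @ w1 @ cf!j @ w2) # (cf!k @ w3) # rest)
             ((rev (cf!i) @ w1 @ rev (cf!j) @ w2) # (rev (cf!k) @ w3) # rest)"
| R3c: "distinct [a, b, c] \<Longrightarrow> distinct [i, j, k] \<Longrightarrow> i < 3 \<Longrightarrow> j < 3 \<Longrightarrow> k < 3 \<Longrightarrow>
       cf = r3cfg e1 e2 e3 a b c \<Longrightarrow>
       gstep ((cf!i @ w1) # (cf!j @ w2) # (cf!k @ w3) # rest)
             ((rev (cf!i) @ w1) # (rev (cf!j) @ w2) # (rev (cf!k) @ w3) # rest)"

text \<open>Equivalence of flat virtual links (Gauss diagrams modulo flat Reidemeister moves;
  virtual crossings are invisible in Gauss diagrams).\<close>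
definition flat_equiv :: "gdiag \<Rightarrow> gdiag \<Rightarrow> bool" where
  "flat_equiv = equivclp gstep"

text \<open>Endpoints met by the strand starting at top position p while traversing the word once;
  crossing labels are the indices of the sigma letters in the word. At sigma_i the strand
  coming from position i gets the head.\<close>
fun passf :: "nat \<Rightarrow> fvgen list \<Rightarrow> nat \<Rightarrow> endpt list" where
  "passf k [] p = []"
| "passf k (S i # w) p =
     (if p = i then [(k, True)] else if p = i + 1 then [(k, False)] else []) @ passf (Suc k) w (swp i p)"
| "passf k (R i # w) p = passf (Suc k) w (swp i p)"

definition endpos :: "fvgen list \<Rightarrow> nat \<Rightarrow> nat" where
  "endpos w p = fold (\<lambda>g q. swp (gidx g) q) w p"

definition orbit_len :: "fvgen list \<Rightarrow> nat \<Rightarrow> nat" where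
  "orbit_len w p = (LEAST r. 0 < r \<and> (endpos w ^^ r) p = p)"

definition comp_word :: "fvgen list \<Rightarrow> nat \<Rightarrow> endpt list" where
  "comp_word w p = concat (map (\<lambda>j. passf 0 w ((endpos w ^^ j) p)) [0..<orbit_len w p])"

definition is_rep :: "fvgen list \<Rightarrow> nat \<Rightarrow> bool" where
  "is_rep w p \<longleftrightarrow> (\<forall>j. p \<le> (endpos w ^^ j) p)"

definition closure :: "nat \<Rightarrow> fvgen list \<Rightarrow> gdiag" where
  "closure n w = map (comp_word w) (filter (is_rep w) [1..<Suc n])"

end

theory Submission
  imports Defs
begin


definition cnc :: "'a fletter \<Rightarrow> 'a fletter \<Rightarrow> bool" where
  "cnc a b \<longleftrightarrow> fst b = fst a \<and> snd b \<noteq> snd a"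

fun ivl :: "'a fletter \<Rightarrow> 'a fletter" where "ivl (a, e) = (a, \<not> e)"

fun red :: "'a fletter list \<Rightarrow> bool" where
  "red (a # b # v) = (\<not> cnc a b \<and> red (b # v))"
| "red _ = True"

lemma freduce_Cons': "freduce (a # w) = (case freduce w of [] \<Rightarrow> [a]
   | b # v \<Rightarrow> if cnc a b then v else a # b # v)"
  unfolding cnc_def by simp

declare freduce.simps(2)[simp del]

lemma red_tl: "red (b # v) \<Longrightarrow> red v"
  by (cases v) auto

lemma red_freduce: "red (freduce w)"
proof (induction w)
  case Nil then show ?case by simp
next
  case (Cons a w)
  then show ?case
    by (cases "freduce w") (auto simp: freduce_Cons' dest: red_tl)
qed

lemma freduce_red: "red w \<Longrightarrow> freduce w = w"
  by (induction w rule: red.induct) (auto simp: freduce_Cons')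

lemma freduce_idem [simp]: "freduce (freduce w) = freduce w"
  by (rule freduce_red[OF red_freduce])

lemma fr_app2: "freduce (u @ freduce v) = freduce (u @ v)"
  by (induction u) (auto simp: freduce_Cons')

lemma fr_Cons2: "freduce (a # freduce v) = freduce (a # v)"
  using fr_app2[of "[a]" v] by simp

lemma fr_cancel0: "freduce (a # ivl a # v) = freduce v"
proof -
  obtain x e where a: "a = (x, e)" by (cases a)
  have r: "red (freduce v)" by (rule red_freduce)
  show ?thesis
  proof (cases "freduce v")
    case Nil then show ?thesis by (simp add: freduce_Cons' a cnc_def)
  next
    case (Cons b r')
    show ?thesis
    proof (cases "cnc (ivl a) b")
      case True
      then have b: "b = a" using a by (cases b) (auto simp: cnc_def)
      show ?thesis
      proof (cases r')
        case Nil then show ?thesis using Cons True b a \<open>freduce v = b # r'\<close> by (simp add: freduce_Cons' cnc_def)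
      next
        case (Cons c r'')
        then show ?thesis using \<open>freduce v = b # r'\<close> r True b a
          by (simp add: freduce_Cons' cnc_def)
      qed
    next
      case False
      have e1: "freduce (ivl a # v) = ivl a # b # r'" using Cons False by (simp add: freduce_Cons')
      have "freduce (a # ivl a # v) = freduce (a # freduce (ivl a # v))" by (simp add: fr_Cons2)
      also have "\<dots> = freduce (a # ivl a # b # r')" using e1 by simp
      also have "\<dots> = b # r'"
      proof -
        have "red (ivl a # b # r')" using False r Cons by simp
        then have "freduce (ivl a # b # r') = ivl a # b # r'" by (rule freduce_red)
        then show ?thesis using a by (simp add: freduce_Cons' cnc_def)
      qed
      finally show ?thesis using Cons by simp
    qed
  qed
qed

lemma fr_cancel: "freduce (u @ a # ivl a # v) = freduce (u @ v)"
  by (metis fr_app2 fr_cancel0)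

lemma ivl_ivl [simp]: "ivl (ivl a) = a" by (cases a) simp

lemma fr_cancel': "freduce (u @ ivl a # a # v) = freduce (u @ v)"
  using fr_cancel[of u "ivl a" v] by simp

lemma fr_app1: "freduce (freduce u @ v) = freduce (u @ v)"
proof (induction u)
  case Nil then show ?case by simp
next
  case (Cons a u)
  have "freduce ((a # u) @ v) = freduce (a # freduce (u @ v))" by (simp add: fr_Cons2)
  also have "\<dots> = freduce (a # (freduce u @ v))" by (simp add: Cons.IH[symmetric] fr_Cons2)
  finally have e: "freduce ((a # u) @ v) = freduce (a # (freduce u @ v))" .
  show ?case
  proof (cases "freduce u")
    case Nil then show ?thesis using e by (simp add: freduce_Cons')
  next
    case (Cons b r)
    show ?thesis
    proof (cases "cnc a b")
      case True
      then have "b = ivl a" by (cases a, cases b) (auto simp: cnc_def)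
      then show ?thesis using e Cons True fr_cancel[of "[]" a "r @ v"] by (simp add: freduce_Cons')
    next
      case False
      then show ?thesis using e Cons by (simp add: freduce_Cons')
    qed
  qed
qed

lemma fr_assoc: "freduce (freduce (u @ v) @ w) = freduce (u @ freduce (v @ w))"
  by (simp add: fr_app1 fr_app2)

lemma finv_Cons: "finv (a # u) = finv u @ [ivl a]"
  by (cases a) (simp add: finv_def)

lemma finv_Nil [simp]: "finv [] = []" by (simp add: finv_def)

lemma finv_append: "finv (u @ v) = finv v @ finv u"
  by (simp add: finv_def)

lemma finv_finv [simp]: "finv (finv u) = u"
  by (induction u) (auto simp: finv_def)

lemma fr_finv_l: "freduce (finv u @ u @ v) = freduce v"
proof (induction u arbitrary: v)
  case Nil then show ?case by simp
next
  case (Cons a u)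
  have "freduce (finv (a # u) @ (a # u) @ v) = freduce (finv u @ ivl a # a # u @ v)"
    by (simp add: finv_Cons)
  also have "\<dots> = freduce (finv u @ u @ v)" by (rule fr_cancel')
  finally show ?case using Cons.IH by simp
qed

lemma fr_finv_r: "freduce (u @ finv u @ v) = freduce v"
  using fr_finv_l[of "finv u" v] by simp

lemma set_freduce: "set (freduce w) \<subseteq> set w"
proof (induction w)
  case Nil then show ?case by simp
next
  case (Cons a w) then show ?case
    by (cases "freduce w") (auto simp: freduce_Cons')
qed

lemma fst_finv: "fst ` set (finv u) = fst ` set u"
  by (force simp: finv_def)

lemma fst_mem_finv: "l \<in> set (finv u) \<Longrightarrow> fst l \<in> fst ` set u"
  by (auto simp: finv_def intro: rev_image_eqI)

lemma finv_letters: "\<forall>l\<in>set x. fst l \<in> A \<Longrightarrow> \<forall>l\<in>set (freduce (finv x)). fst l \<in> A"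
proof
  fix l assume h: "\<forall>l\<in>set x. fst l \<in> A" and l: "l \<in> set (freduce (finv x))"
  then have "l \<in> set (finv x)" using set_freduce by blast
  then have "fst l \<in> fst ` set x" by (rule fst_mem_finv)
  then show "fst l \<in> A" using h by auto
qed

lemma carrier_fg: "carrier (free_group A) = {w. freduce w = w \<and> (\<forall>l\<in>set w. fst l \<in> A)}"
  by (simp add: free_group_def)

lemma mult_fg: "u \<otimes>\<^bsub>free_group A\<^esub> v = freduce (u @ v)"
  by (simp add: free_group_def)

lemma one_fg: "\<one>\<^bsub>free_group A\<^esub> = []"
  by (simp add: free_group_def)

lemma fg_group: "group (free_group A)"
proof (rule groupI)
  fix x y assume "x \<in> carrier (free_group A)" "y \<in> carrier (free_group A)"
  then show "x \<otimes>\<^bsub>free_group A\<^esub> y \<in> carrier (free_group A)"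
    using set_freduce[of "x @ y"] by (auto simp: carrier_fg mult_fg)
next
  show "\<one>\<^bsub>free_group A\<^esub> \<in> carrier (free_group A)" by (simp add: carrier_fg one_fg)
next
  fix x y z
  show "x \<otimes>\<^bsub>free_group A\<^esub> y \<otimes>\<^bsub>free_group A\<^esub> z = x \<otimes>\<^bsub>free_group A\<^esub> (y \<otimes>\<^bsub>free_group A\<^esub> z)"
    by (simp add: mult_fg fr_assoc)
next
  fix x assume "x \<in> carrier (free_group A)"
  then show "\<one>\<^bsub>free_group A\<^esub> \<otimes>\<^bsub>free_group A\<^esub> x = x" by (simp add: carrier_fg one_fg mult_fg)
next
  fix x assume x: "x \<in> carrier (free_group A)"
  have "freduce (finv x) \<in> carrier (free_group A)"
    using x finv_letters[of x A] by (auto simp: carrier_fg)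
  moreover have "freduce (finv x) \<otimes>\<^bsub>free_group A\<^esub> x = \<one>\<^bsub>free_group A\<^esub>"
    using fr_finv_l[of x "[]"] by (simp add: mult_fg one_fg fr_app1)
  ultimately show "\<exists>y\<in>carrier (free_group A). y \<otimes>\<^bsub>free_group A\<^esub> x = \<one>\<^bsub>free_group A\<^esub>" by blast
qed

lemma inv_fg: "x \<in> carrier (free_group A) \<Longrightarrow> inv\<^bsub>free_group A\<^esub> x = freduce (finv x)"
proof -
  assume x: "x \<in> carrier (free_group A)"
  interpret group "free_group A" by (rule fg_group)
  have c: "freduce (finv x) \<in> carrier (free_group A)"
    using x finv_letters[of x A] by (auto simp: carrier_fg)
  have "freduce (finv x) \<otimes>\<^bsub>free_group A\<^esub> x = \<one>\<^bsub>free_group A\<^esub>"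
    using fr_finv_l[of x "[]"] by (simp add: mult_fg one_fg fr_app1)
  then show ?thesis using inv_equality[OF _ x c] by simp
qed

section \<open>Substitution homomorphisms\<close>

definition img :: "('a \<Rightarrow> 'b fletter list) \<Rightarrow> 'a fletter \<Rightarrow> 'b fletter list" where
  "img f l = (if snd l then finv (f (fst l)) else f (fst l))"

lemma fsubst_img: "fsubst f w = freduce (concat (map (img f) w))"
proof -
  have "(\<lambda>(a, e). if e then finv (f a) else f a) = img f"
    by (auto simp: img_def)
  then show ?thesis by (simp add: fsubst_def)
qed

lemma fsubst_Nil [simp]: "fsubst f [] = []" by (simp add: fsubst_img)

lemma fsubst_Cons: "fsubst f (l # w) = freduce (img f l @ fsubst f w)"
  by (simp add: fsubst_img fr_app2)

lemma fsubst_append: "fsubst f (u @ v) = freduce (fsubst f u @ fsubst f v)"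
  by (simp add: fsubst_img fr_app1 fr_app2)

lemma img_ivl: "img f (ivl l) = finv (img f l)"
  by (cases l) (auto simp: img_def)

lemma fsubst_freduce: "fsubst f (freduce w) = fsubst f w"
proof (induction w)
  case Nil then show ?case by simp
next
  case (Cons a w)
  have e: "fsubst f (a # w) = freduce (img f a @ fsubst f (freduce w))"
    by (simp add: fsubst_Cons Cons.IH)
  show ?case
  proof (cases "freduce w")
    case Nil then show ?thesis using e by (simp add: freduce_Cons' fsubst_Cons)
  next
    case (Cons b r)
    show ?thesis
    proof (cases "cnc a b")
      case True
      then have b: "b = ivl a" by (cases a, cases b) (auto simp: cnc_def)
      have "fsubst f (a # w) = freduce (img f a @ freduce (finv (img f a) @ fsubst f r))"
        using e Cons b by (simp add: fsubst_Cons img_ivl)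
      also have "\<dots> = freduce (fsubst f r)" by (simp add: fr_app2 fr_finv_r)
      also have "\<dots> = fsubst f r" by (simp add: fsubst_img)
      finally show ?thesis using Cons True by (simp add: freduce_Cons')
    next
      case False
      then show ?thesis using e Cons by (simp add: freduce_Cons' fsubst_Cons)
    qed
  qed
qed

lemma fsubst_red [simp]: "freduce (fsubst f w) = fsubst f w"
  by (simp add: fsubst_img)

lemma fsubst_single: "fsubst f [(a, False)] = freduce (f a)"
  by (simp add: fsubst_img img_def)

lemma fsubst_hom:
  assumes "\<And>a. a \<in> A \<Longrightarrow> f a \<in> carrier (free_group B)"
  shows "fsubst f \<in> hom (free_group A) (free_group B)"
proof (rule homI)
  fix x assume x: "x \<in> carrier (free_group A)"
  have "\<forall>l\<in>set (concat (map (img f) x)). fst l \<in> B"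
  proof
    fix l assume "l \<in> set (concat (map (img f) x))"
    then obtain l0 where l0: "l0 \<in> set x" "l \<in> set (img f l0)" by auto
    have A: "fst l0 \<in> A" using x l0 by (auto simp: carrier_fg)
    have fB: "\<forall>l\<in>set (f (fst l0)). fst l \<in> B" using assms[OF A] by (simp add: carrier_fg)
    show "fst l \<in> B"
    proof (cases "snd l0")
      case True
      then have "l \<in> set (finv (f (fst l0)))" using l0 by (simp add: img_def)
      then show ?thesis using fB fst_mem_finv by fastforce
    next
      case False
      then show ?thesis using l0 fB by (simp add: img_def)
    qed
  qed
  then show "fsubst f x \<in> carrier (free_group B)"
    using set_freduce by (fastforce simp: carrier_fg fsubst_img)
next
  fix x y
  show "fsubst f (x \<otimes>\<^bsub>free_group A\<^esub> y) = fsubst f x \<otimes>\<^bsub>free_group B\<^esub> fsubst f y"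
    by (simp add: mult_fg fsubst_freduce fsubst_append)
qed

lemma fg_gen_carrier: "a \<in> A \<Longrightarrow> [(a, e)] \<in> carrier (free_group A)"
  by (simp add: carrier_fg freduce_Cons')

lemma fg_inv_gen: "a \<in> A \<Longrightarrow> inv\<^bsub>free_group A\<^esub> [(a, False)] = [(a, True)]"
  by (simp add: inv_fg fg_gen_carrier finv_def freduce_Cons')

lemma fg_Cons_mult: "l # w \<in> carrier (free_group A) \<Longrightarrow> l # w = [l] \<otimes>\<^bsub>free_group A\<^esub> w"
  by (simp add: carrier_fg mult_fg)

lemma fg_tl_carrier: "l # w \<in> carrier (free_group A) \<Longrightarrow> w \<in> carrier (free_group A)"
proof -
  assume h: "l # w \<in> carrier (free_group A)"
  then have "freduce (l # w) = l # w" "\<forall>x\<in>set (l # w). fst x \<in> A" by (simp_all add: carrier_fg)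
  then have "red (l # w)" by (metis red_freduce)
  then have "red w" by (rule red_tl)
  then show ?thesis using h by (simp add: carrier_fg freduce_red)
qed

lemma fg_hom_agree:
  assumes "h1 \<in> hom (free_group A) K" "h2 \<in> hom (free_group A) K" "group K"
    and "\<And>a. a \<in> A \<Longrightarrow> h1 [(a, False)] = h2 [(a, False)]"
    and "u \<in> carrier (free_group A)"
  shows "h1 u = h2 u"
  using assms(5)
proof (induction u)
  case Nil
  then show ?case using assms(1,2,3) fg_group[of A]
    by (metis group_hom.hom_one group_hom.intro group_hom_axioms.intro one_fg)
next
  case (Cons l w)
  obtain a e where l: "l = (a, e)" by (cases l)
  have a: "a \<in> A" using Cons.prems l by (auto simp: carrier_fg)
  have w: "w \<in> carrier (free_group A)" using Cons.prems by (rule fg_tl_carrier)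
  have gh1: "group_hom (free_group A) K h1" using assms fg_group by (simp add: group_hom_def group_hom_axioms_def)
  have gh2: "group_hom (free_group A) K h2" using assms fg_group by (simp add: group_hom_def group_hom_axioms_def)
  have hl: "h1 [l] = h2 [l]"
  proof (cases e)
    case False then show ?thesis using assms(4) a l by simp
  next
    case True
    then have "[l] = inv\<^bsub>free_group A\<^esub> [(a, False)]" using fg_inv_gen[OF a, symmetric] l by simp
    then show ?thesis using assms(4)[OF a] group_hom.hom_inv[OF gh1] group_hom.hom_inv[OF gh2]
        fg_gen_carrier[OF a] by simp
  qed
  have "h1 (l # w) = h1 [l] \<otimes>\<^bsub>K\<^esub> h1 w" using fg_Cons_mult[OF Cons.prems] hom_mult[OF assms(1)]
      fg_gen_carrier[OF a] w l by metis
  moreover have "h2 (l # w) = h2 [l] \<otimes>\<^bsub>K\<^esub> h2 w" using fg_Cons_mult[OF Cons.prems] hom_mult[OF assms(2)]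
      fg_gen_carrier[OF a] w l by metis
  ultimately show ?case using hl Cons.IH[OF w] by simp
qed


definition conjs :: "('a, 'b) monoid_scheme \<Rightarrow> 'a set \<Rightarrow> 'a set" where
  "conjs G A = (\<Union>g\<in>carrier G. (\<lambda>r. g \<otimes>\<^bsub>G\<^esub> r \<otimes>\<^bsub>G\<^esub> inv\<^bsub>G\<^esub> g) ` A)"

lemma nc_def2: "normal_closure G A = generate G (conjs G A)"
  by (simp add: normal_closure_def conjs_def)

lemma (in group) conjs_carrier: "A \<subseteq> carrier G \<Longrightarrow> conjs G A \<subseteq> carrier G"
  by (auto simp: conjs_def)

lemma (in group) nc_normal:
  assumes "A \<subseteq> carrier G" shows "normal_closure G A \<lhd> G"
  unfolding nc_def2
proof (rule normal_generateI[OF conjs_carrier[OF assms]])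
  fix h g assume h: "h \<in> conjs G A" and g: "g \<in> carrier G"
  then obtain k r where k: "k \<in> carrier G" "r \<in> A" "h = k \<otimes> r \<otimes> inv k" by (auto simp: conjs_def)
  have r: "r \<in> carrier G" using k assms by auto
  have "g \<otimes> h \<otimes> inv g = (g \<otimes> k) \<otimes> r \<otimes> inv (g \<otimes> k)"
    using k g r by (simp add: m_assoc inv_mult_group)
  then show "g \<otimes> h \<otimes> inv g \<in> conjs G A" using k g unfolding conjs_def by blast
qed

lemma (in group) nc_incl:
  assumes "A \<subseteq> carrier G" "r \<in> A" shows "r \<in> normal_closure G A"
proof -
  have "r = \<one> \<otimes> r \<otimes> inv \<one>" using assms by auto
  then have "r \<in> conjs G A" using assms unfolding conjs_def by blast
  then show ?thesis unfolding nc_def2 by (rule generate.incl)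
qed

lemma nc_hom:
  assumes G: "group G" and H: "group H" and h: "h \<in> hom G H" and M: "M \<lhd> H"
    and A: "A \<subseteq> carrier G" and hA: "\<And>a. a \<in> A \<Longrightarrow> h a \<in> M"
    and x: "x \<in> normal_closure G A"
  shows "h x \<in> M"
proof -
  interpret G: group G by (rule G)
  interpret H: group H by (rule H)
  interpret M: normal M H by (rule M)
  interpret gh: group_hom G H h by (simp add: group_hom_def group_hom_axioms_def G H h)
  have cc: "conjs G A \<subseteq> carrier G" by (rule G.conjs_carrier[OF A])
  from x[unfolded nc_def2] show ?thesis
  proof (induction rule: generate.induct)
    case one then show ?case by (simp add: M.one_closed)
  next
    case (incl c)
    then obtain k r where k: "k \<in> carrier G" "r \<in> A" "c = k \<otimes>\<^bsub>G\<^esub> r \<otimes>\<^bsub>G\<^esub> inv\<^bsub>G\<^esub> k"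
      by (auto simp: conjs_def)
    have r: "r \<in> carrier G" using k A by auto
    have "h c = h k \<otimes>\<^bsub>H\<^esub> h r \<otimes>\<^bsub>H\<^esub> inv\<^bsub>H\<^esub> h k" using k r by simp
    then show ?case using M.inv_op_closed2[OF gh.hom_closed[OF k(1)] hA[OF k(2)]] by simp
  next
    case (inv c)
    then obtain k r where k: "k \<in> carrier G" "r \<in> A" "c = k \<otimes>\<^bsub>G\<^esub> r \<otimes>\<^bsub>G\<^esub> inv\<^bsub>G\<^esub> k"
      by (auto simp: conjs_def)
    have r: "r \<in> carrier G" using k A by auto
    have "h c = h k \<otimes>\<^bsub>H\<^esub> h r \<otimes>\<^bsub>H\<^esub> inv\<^bsub>H\<^esub> h k" using k r by simp
    then have "h c \<in> M" using M.inv_op_closed2[OF gh.hom_closed[OF k(1)] hA[OF k(2)]] by simp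
    moreover have "c \<in> carrier G" using inv.hyps cc by auto
    ultimately show ?case by (simp add: M.m_inv_closed)
  next
    case (eng h1 h2)
    have "h1 \<in> carrier G" "h2 \<in> carrier G"
      using eng.hyps G.generate_in_carrier[OF cc] by auto
    then show ?case using eng.IH by (simp add: M.m_closed)
  qed
qed

section \<open>Tietze-type isomorphism criterion\<close>

lemma (in normal) coset_eq_iff:
  assumes "x \<in> carrier G" "y \<in> carrier G"
  shows "(H #> x = H #> y) \<longleftrightarrow> x \<otimes> inv y \<in> H"
proof
  assume "H #> x = H #> y"
  then have "x \<in> H #> y" using rcos_self[OF assms(1) subgroup_axioms] by simp
  then show "x \<otimes> inv y \<in> H" using rcos_module_imp[OF is_group assms(2)] by simp
next
  assume "x \<otimes> inv y \<in> H"
  then have "x \<in> H #> y" using rcos_module_rev[OF is_group assms(2) assms(1)] by simp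
  then show "H #> x = H #> y" using repr_independence[OF _ assms(2) subgroup_axioms] by simp
qed

lemma (in normal) coset_one_iff:
  assumes "x \<in> carrier G"
  shows "(H #> x = H) \<longleftrightarrow> x \<in> H"
proof -
  have "H #> \<one> = H" by (rule coset_mult_one[OF subgroup.subset[OF subgroup_axioms]])
  then show ?thesis using coset_eq_iff[OF assms one_closed] assms by simp
qed

lemma quot_hom:
  assumes G: "group G" and H: "group H" and M: "M \<lhd> H" and h: "h \<in> hom G H"
  shows "(\<lambda>x. M #>\<^bsub>H\<^esub> h x) \<in> hom G (H Mod M)"
proof -
  interpret M: normal M H by (rule M)
  show ?thesis
  proof (rule homI)
    fix x assume "x \<in> carrier G"
    then show "M #>\<^bsub>H\<^esub> h x \<in> carrier (H Mod M)"
      using h by (auto simp: FactGroup_def RCOSETS_def hom_def Pi_def)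
  next
    fix x y assume "x \<in> carrier G" "y \<in> carrier G"
    then show "M #>\<^bsub>H\<^esub> h (x \<otimes>\<^bsub>G\<^esub> y) = (M #>\<^bsub>H\<^esub> h x) \<otimes>\<^bsub>H Mod M\<^esub> (M #>\<^bsub>H\<^esub> h y)"
      using h by (auto simp: hom_def Pi_def M.rcos_sum)
  qed
qed

lemma tietze:
  assumes G: "group G" and H: "group H" and N: "N \<lhd> G" and M: "M \<lhd> H"
    and Phi: "Phi \<in> hom G H" and Psi: "Psi \<in> hom H G"
    and PhiN: "\<And>x. x \<in> N \<Longrightarrow> Phi x \<in> M"
    and PsiM: "\<And>y. y \<in> M \<Longrightarrow> Psi y \<in> N"
    and id1: "\<And>x. x \<in> carrier G \<Longrightarrow> N #>\<^bsub>G\<^esub> Psi (Phi x) = N #>\<^bsub>G\<^esub> x"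
    and id2: "\<And>y. y \<in> carrier H \<Longrightarrow> M #>\<^bsub>H\<^esub> Phi (Psi y) = M #>\<^bsub>H\<^esub> y"
  shows "G Mod N \<cong> H Mod M"
proof -
  interpret G: group G by (rule G)
  interpret H: group H by (rule H)
  interpret N: normal N G by (rule N)
  interpret M: normal M H by (rule M)
  interpret gh1: group_hom G H Phi by (simp add: group_hom_def group_hom_axioms_def G H Phi)
  interpret gh2: group_hom H G Psi by (simp add: group_hom_def group_hom_axioms_def G H Psi)
  have h1: "(\<lambda>x. M #>\<^bsub>H\<^esub> Phi x) \<in> hom G (H Mod M)" by (rule quot_hom[OF G H M Phi])
  have h2: "(\<lambda>y. N #>\<^bsub>G\<^esub> Psi y) \<in> hom H (G Mod N)" by (rule quot_hom[OF H G N Psi])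
  obtain g1 where g1: "g1 \<in> hom (G Mod N) (H Mod M)"
    "\<And>x. x \<in> carrier G \<Longrightarrow> g1 (N #>\<^bsub>G\<^esub> x) = M #>\<^bsub>H\<^esub> Phi x"
  proof (rule FactGroup_universal[OF h1 N])
    fix x y assume xy: "x \<in> carrier G" "y \<in> carrier G" "N #>\<^bsub>G\<^esub> x = N #>\<^bsub>G\<^esub> y"
    then have "x \<otimes>\<^bsub>G\<^esub> inv\<^bsub>G\<^esub> y \<in> N" using N.coset_eq_iff by simp
    then have "Phi (x \<otimes>\<^bsub>G\<^esub> inv\<^bsub>G\<^esub> y) \<in> M" by (rule PhiN)
    then have "Phi x \<otimes>\<^bsub>H\<^esub> inv\<^bsub>H\<^esub> Phi y \<in> M" using xy by simp
    then show "M #>\<^bsub>H\<^esub> Phi x = M #>\<^bsub>H\<^esub> Phi y" using M.coset_eq_iff xy by simp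
  qed auto
  obtain g2 where g2: "g2 \<in> hom (H Mod M) (G Mod N)"
    "\<And>y. y \<in> carrier H \<Longrightarrow> g2 (M #>\<^bsub>H\<^esub> y) = N #>\<^bsub>G\<^esub> Psi y"
  proof (rule FactGroup_universal[OF h2 M])
    fix x y assume xy: "x \<in> carrier H" "y \<in> carrier H" "M #>\<^bsub>H\<^esub> x = M #>\<^bsub>H\<^esub> y"
    then have "x \<otimes>\<^bsub>H\<^esub> inv\<^bsub>H\<^esub> y \<in> M" using M.coset_eq_iff by simp
    then have "Psi (x \<otimes>\<^bsub>H\<^esub> inv\<^bsub>H\<^esub> y) \<in> N" by (rule PsiM)
    then have "Psi x \<otimes>\<^bsub>G\<^esub> inv\<^bsub>G\<^esub> Psi y \<in> N" using xy by simp
    then show "N #>\<^bsub>G\<^esub> Psi x = N #>\<^bsub>G\<^esub> Psi y" using N.coset_eq_iff xy by simp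
  qed auto
  have "bij_betw g1 (carrier (G Mod N)) (carrier (H Mod M))"
  proof (rule bij_betw_byWitness[where f' = g2])
    show "\<forall>a\<in>carrier (G Mod N). g2 (g1 a) = a"
      using g1 g2 id1 by (auto simp: carrier_FactGroup)
    show "\<forall>a'\<in>carrier (H Mod M). g1 (g2 a') = a'"
      using g1 g2 id2 by (auto simp: carrier_FactGroup)
    show "g1 ` carrier (G Mod N) \<subseteq> carrier (H Mod M)" using g1(1) by (auto simp: hom_def)
    show "g2 ` carrier (H Mod M) \<subseteq> carrier (G Mod N)" using g2(1) by (auto simp: hom_def)
  qed
  then have "g1 \<in> iso (G Mod N) (H Mod M)" using g1(1) by (simp add: iso_def)
  then show ?thesis by (rule is_isoI)
qed


definition dl :: "endpt list \<Rightarrow> int" where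
  "dl c = sum_list (map (\<lambda>p. if snd p then 1 else -1) c)"

lemma dl_append [simp]: "dl (u @ v) = dl u + dl v" by (simp add: dl_def)
lemma dl_rev [simp]: "dl (rev u) = dl u" by (induction u) (auto simp: dl_def)
lemma dl_Nil [simp]: "dl [] = 0" by (simp add: dl_def)
lemma dl_Cons: "dl (p # u) = (if snd p then 1 else -1) + dl u" by (simp add: dl_def)

lemma dl_relabel: "dl (map (\<lambda>(k, h). (f k, h)) c) = dl c"
  by (induction c) (auto simp: dl_Cons)

lemma r3_dl: "i < 3 \<Longrightarrow> dl (rev (r3cfg e1 e2 e3 a b c ! i)) = dl (r3cfg e1 e2 e3 a b c ! i)"
  by simp

lemma gstep_inv: "gstep D D' \<Longrightarrow> mset (map dl D) = mset (map dl D')"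
proof (induction rule: gstep.induct)
  case (rotate u v rest) then show ?case by (simp add: add.commute)
next
  case (permute D' D)
  then show ?case by (metis mset_map)
next
  case (relabel f D)
  then show ?case by (simp add: comp_def dl_relabel)
next
  case (R1 k w rest x) then show ?case by (simp add: dl_Cons)
next
  case (R2a a b D w1 w2 rest s2 x) then show ?case by (auto simp: dl_Cons)
next
  case (R2b a b D w1 w2 rest s2 x) then show ?case by (auto simp: dl_Cons)
qed simp_all

lemma flat_equiv_inv:
  assumes "flat_equiv D D'" shows "mset (map dl D) = mset (map dl D')"
  using assms unfolding flat_equiv_def
proof (induction rule: equivclp_induct)
  case base then show ?case by simp
next
  case (step y z)
  then show ?case using gstep_inv by metis
qed


section \<open>Permutation orbits\<close>

locale pf =
  fixes f :: "nat \<Rightarrow> nat" and S :: "nat set"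
  assumes inj: "inj f" and fin: "finite S" and cl: "\<And>p. p \<in> S \<Longrightarrow> f p \<in> S"
begin

lemma funpow_in: "p \<in> S \<Longrightarrow> (f ^^ j) p \<in> S"
  by (induction j) (auto simp: cl)

lemma inj_pow: "inj (f ^^ j)"
  by (rule inj_fn[OF inj])

lemma funpow_add_app: "(f ^^ (a + b)) p = (f ^^ a) ((f ^^ b) p)"
  by (simp add: funpow_add)

lemma per_ex: assumes p: "p \<in> S" shows "\<exists>L>0. (f ^^ L) p = p"
proof -
  let ?g = "\<lambda>j. (f ^^ j) p"
  have "?g ` {..card S} \<subseteq> S" using funpow_in p by auto
  then have "card (?g ` {..card S}) \<le> card S" using fin by (rule card_mono[rotated])
  then have "card (?g ` {..card S}) < card {..card S}" by simp
  then have "\<not> inj_on ?g {..card S}" by (rule pigeonhole)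
  then obtain a b where ab: "a \<noteq> b" "?g a = ?g b" by (auto simp: inj_on_def)
  {
    fix a b assume ab: "a < b" "?g a = ?g b"
    have "(f ^^ a) ((f ^^ (b - a)) p) = (f ^^ a) p"
      using ab funpow_add_app[of a "b - a" p] by simp
    then have "(f ^^ (b - a)) p = p" using inj_pow[of a] by (simp add: inj_def)
    then have "\<exists>L>0. (f ^^ L) p = p" using ab by (intro exI[of _ "b - a"]) simp
  }
  then show ?thesis using ab by (metis linorder_neqE_nat)
qed

definition OL :: "nat \<Rightarrow> nat" where
  "OL p = (LEAST r. 0 < r \<and> (f ^^ r) p = p)"

lemma OL: assumes "p \<in> S" shows "0 < OL p" "(f ^^ OL p) p = p"
  using LeastI_ex[OF per_ex[OF assms]] unfolding OL_def by auto

lemma OL_min: "0 < r \<Longrightarrow> r < OL p \<Longrightarrow> (f ^^ r) p \<noteq> p"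
  unfolding OL_def using not_less_Least by blast

lemma funpow_mult_per: "(f ^^ L) p = p \<Longrightarrow> (f ^^ (q * L)) p = p"
proof (induction q)
  case 0 then show ?case by simp
next
  case (Suc q)
  have "(f ^^ (Suc q * L)) p = (f ^^ L) ((f ^^ (q * L)) p)"
    by (simp add: funpow_add_app[symmetric] add.commute)
  then show ?case using Suc by simp
qed

lemma funpow_mod: assumes "p \<in> S" shows "(f ^^ (j mod OL p)) p = (f ^^ j) p"
proof -
  have "(f ^^ j) p = (f ^^ (j mod OL p + j div OL p * OL p)) p" using mod_div_mult_eq[of j "OL p"] by simp
  also have "\<dots> = (f ^^ (j mod OL p)) ((f ^^ (j div OL p * OL p)) p)" by (rule funpow_add_app)
  also have "\<dots> = (f ^^ (j mod OL p)) p" using funpow_mult_per[OF OL(2)[OF assms]] by simp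
  finally show ?thesis by simp
qed

lemma mod_unique:
  assumes "a < OL p" "b < OL p" "(f ^^ a) p = (f ^^ b) p" shows "a = b"
proof -
  {
    fix a b assume ab: "a < b" "b < OL p" "(f ^^ a) p = (f ^^ b) p"
    have "(f ^^ a) ((f ^^ (b - a)) p) = (f ^^ a) p"
      using ab funpow_add_app[of a "b - a" p] by simp
    then have "(f ^^ (b - a)) p = p" using inj_pow[of a] by (simp add: inj_def)
    moreover have "0 < b - a" "b - a < OL p" using ab by auto
    ultimately have False using OL_min by blast
  }
  then show ?thesis using assms by (metis linorder_neqE_nat)
qed

lemma pow_eq_mod:
  assumes "p \<in> S" "(f ^^ a) p = (f ^^ b) p" shows "a mod OL p = b mod OL p"
  using mod_unique[of "a mod OL p" p "b mod OL p"] funpow_mod[OF assms(1)] assms(2) OL(1)[OF assms(1)]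
  by simp

definition orb :: "nat \<Rightarrow> nat set" where "orb p = range (\<lambda>j. (f ^^ j) p)"

lemma orb_S: "p \<in> S \<Longrightarrow> orb p \<subseteq> S"
  using funpow_in by (auto simp: orb_def)

lemma orb_fin: "p \<in> S \<Longrightarrow> finite (orb p)"
  using orb_S fin finite_subset by blast

lemma orb_self: "p \<in> orb p"
  unfolding orb_def by (metis funpow_0 rangeI)

lemma orb_sub: "q \<in> orb p \<Longrightarrow> orb q \<subseteq> orb p"
  unfolding orb_def by (auto simp: funpow_add_app[symmetric])

lemma orb_back: assumes p: "p \<in> S" and q: "q \<in> orb p" shows "p \<in> orb q"
proof -
  obtain a where a: "q = (f ^^ a) p" using q by (auto simp: orb_def)
  have "(f ^^ ((OL p - 1) * a)) q = (f ^^ ((OL p - 1) * a + a)) p"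
    using a funpow_add_app by simp
  also have "(OL p - 1) * a + a = a * OL p" using OL(1)[OF p]
    by (simp add: algebra_simps)
  also have "(f ^^ (a * OL p)) p = p" by (rule funpow_mult_per[OF OL(2)[OF p]])
  finally show ?thesis unfolding orb_def by (metis rangeI)
qed

lemma orb_eq: "p \<in> S \<Longrightarrow> q \<in> orb p \<Longrightarrow> orb q = orb p"
  by (meson orb_back orb_sub subset_antisym)

definition rep :: "nat \<Rightarrow> nat" where "rep p = Min (orb p)"

lemma rep_in: "p \<in> S \<Longrightarrow> rep p \<in> orb p"
  unfolding rep_def using orb_fin orb_self by (metis Min_in empty_iff)

lemma rep_S: "p \<in> S \<Longrightarrow> rep p \<in> S"
  using rep_in orb_S by blast

lemma rep_orb: "p \<in> S \<Longrightarrow> orb (rep p) = orb p"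
  using orb_eq rep_in by blast

lemma rep_is: "p \<in> S \<Longrightarrow> rep p \<le> (f ^^ j) (rep p)"
proof -
  assume p: "p \<in> S"
  have "(f ^^ j) (rep p) \<in> orb (rep p)" by (auto simp: orb_def)
  then have "(f ^^ j) (rep p) \<in> orb p" using rep_orb[OF p] by simp
  then show ?thesis unfolding rep_def using orb_fin[OF p] by simp
qed

lemma rep_fix: assumes "r \<in> S" "\<forall>j. r \<le> (f ^^ j) r" shows "rep r = r"
proof -
  have "\<forall>y\<in>orb r. r \<le> y" using assms(2) by (auto simp: orb_def)
  then show ?thesis unfolding rep_def using Min_eqI[OF orb_fin[OF assms(1)] _ orb_self] by blast
qed

lemma rep_f: "p \<in> S \<Longrightarrow> rep (f p) = rep p"
proof -
  assume p: "p \<in> S"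
  have "f p = (f ^^ 1) p" by simp
  then have "f p \<in> orb p" unfolding orb_def by (metis rangeI)
  then show ?thesis unfolding rep_def using orb_eq[OF p] by simp
qed

lemma in_orb_rep: "p \<in> S \<Longrightarrow> \<exists>j. (f ^^ j) (rep p) = p"
  using orb_self rep_orb unfolding orb_def by (metis rangeE)

definition jj :: "nat \<Rightarrow> nat" where "jj p = (LEAST j. (f ^^ j) (rep p) = p)"

lemma jj: "p \<in> S \<Longrightarrow> (f ^^ jj p) (rep p) = p"
  unfolding jj_def using LeastI_ex[OF in_orb_rep] by blast

lemma jj_rep: "r \<in> S \<Longrightarrow> rep r = r \<Longrightarrow> jj r = 0"
  unfolding jj_def by simp

definition ss :: "(nat \<Rightarrow> int) \<Rightarrow> nat \<Rightarrow> nat \<Rightarrow> int" where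
  "ss k r j = (\<Sum>l<j. k ((f ^^ l) r))"

lemma ss_0 [simp]: "ss k r 0 = 0" by (simp add: ss_def)
lemma ss_Suc: "ss k r (Suc j) = ss k r j + k ((f ^^ j) r)" by (simp add: ss_def)

lemma ss_add_L: assumes r: "r \<in> S" shows "ss k r (OL r + j) = ss k r (OL r) + ss k r j"
proof (induction j)
  case 0 then show ?case by simp
next
  case (Suc j)
  have "(f ^^ (OL r + j)) r = (f ^^ j) r"
    using funpow_add_app[of j "OL r" r] OL(2)[OF r] by (simp add: add.commute)
  then show ?case using Suc by (simp add: ss_Suc)
qed

lemma ss_mult_L: assumes r: "r \<in> S" shows "ss k r (q * OL r + t) = int q * ss k r (OL r) + ss k r t"
proof (induction q)
  case 0 then show ?case by simp
next
  case (Suc q)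
  have "ss k r (Suc q * OL r + t) = ss k r (OL r + (q * OL r + t))" by (simp add: add.assoc)
  also have "\<dots> = ss k r (OL r) + ss k r (q * OL r + t)" by (rule ss_add_L[OF r])
  finally show ?case using Suc by (simp add: algebra_simps)
qed

lemma ss_cong:
  assumes r: "r \<in> S" and e: "(f ^^ a) r = (f ^^ b) r"
  shows "ss k r (OL r) dvd (ss k r a - ss k r b)"
proof -
  have m: "a mod OL r = b mod OL r" by (rule pow_eq_mod[OF r e])
  have a: "ss k r a = int (a div OL r) * ss k r (OL r) + ss k r (a mod OL r)"
    using ss_mult_L[OF r, of k "a div OL r" "a mod OL r"] unfolding div_mult_mod_eq .
  have b: "ss k r b = int (b div OL r) * ss k r (OL r) + ss k r (b mod OL r)"
    using ss_mult_L[OF r, of k "b div OL r" "b mod OL r"] unfolding div_mult_mod_eq .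
  have "ss k r a - ss k r b = (int (a div OL r) - int (b div OL r)) * ss k r (OL r)"
    using a b m by (simp add: algebra_simps)
  then show ?thesis by simp
qed

definition ee :: "(nat \<Rightarrow> int) \<Rightarrow> nat \<Rightarrow> int" where
  "ee k p = - ss k (rep p) (jj p)"

lemma ee_step:
  assumes p: "p \<in> S"
  shows "ss k (rep p) (OL (rep p)) dvd (ee k (f p) + k p - ee k p)"
proof -
  let ?r = "rep p"
  have r: "?r \<in> S" by (rule rep_S[OF p])
  have fp: "f p \<in> S" by (rule cl[OF p])
  have rf: "rep (f p) = ?r" by (rule rep_f[OF p])
  have a: "(f ^^ jj p) ?r = p" by (rule jj[OF p])
  have b: "(f ^^ jj (f p)) ?r = f p" using jj[OF fp] rf by simp
  have "(f ^^ Suc (jj p)) ?r = f p" using a by simp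
  then have e: "(f ^^ jj (f p)) ?r = (f ^^ Suc (jj p)) ?r" using b by simp
  have "ee k (f p) + k p - ee k p = - (ss k ?r (jj (f p)) - ss k ?r (Suc (jj p)))"
    using a rf by (simp add: ee_def ss_Suc)
  then show ?thesis using ss_cong[OF r e, of k] by (metis dvd_minus_iff)
qed

lemma ee_rep: "r \<in> S \<Longrightarrow> rep r = r \<Longrightarrow> ee k r = 0"
  by (simp add: ee_def jj_rep)

end

section \<open>Braid combinatorics\<close>

lemma swp_swp [simp]: "swp i (swp i j) = j" by (auto simp: swp_def)

lemma inj_swp: "inj (swp i)" by (metis injI swp_swp)

lemma endpos_Nil [simp]: "endpos [] p = p" by (simp add: endpos_def)
lemma endpos_snoc: "endpos (w @ [h]) p = swp (gidx h) (endpos w p)" by (simp add: endpos_def)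
lemma endpos_Cons: "endpos (h # w) p = endpos w (swp (gidx h) p)" by (simp add: endpos_def)

lemma inj_endpos: "inj (endpos w)"
proof (induction w rule: rev_induct)
  case Nil then show ?case by (simp add: inj_def)
next
  case (snoc h w)
  have "endpos (w @ [h]) = swp (gidx h) \<circ> endpos w" by (rule ext) (simp add: endpos_snoc)
  moreover have "inj (swp (gidx h) \<circ> endpos w)" by (rule inj_compose[OF inj_swp snoc.IH])
  ultimately show ?case by (simp only:)
qed

lemma fvb_word_snoc: "fvb_word n (w @ [h]) \<longleftrightarrow> fvb_word n w \<and> 1 \<le> gidx h \<and> gidx h < n"
  by (auto simp: fvb_word_def)

lemma swp_range: "1 \<le> i \<Longrightarrow> i < n \<Longrightarrow> j \<in> {1..n} \<Longrightarrow> swp i j \<in> {1..n}"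
  by (auto simp: swp_def)

lemma endpos_range: "fvb_word n w \<Longrightarrow> p \<in> {1..n} \<Longrightarrow> endpos w p \<in> {1..n}"
proof (induction w rule: rev_induct)
  case Nil then show ?case by simp
next
  case (snoc h w)
  then show ?case using swp_range[of "gidx h" n "endpos w p"] by (simp add: fvb_word_snoc endpos_snoc del: atLeastAtMost_iff)
qed

lemma pf_endpos: "fvb_word n w \<Longrightarrow> pf (endpos w) {1..n}"
  apply unfold_locales
    apply (rule inj_endpos)
   apply simp
  using endpos_range[of n w] by blast

lemma passf_snoc: "passf k (w @ [h]) p = passf k w p @ passf (k + length w) [h] (endpos w p)"
proof (induction w arbitrary: k p)
  case Nil then show ?case by simp
next
  case (Cons g w)
  then show ?case by (cases g) (simp_all add: endpos_Cons)
qed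

definition kk :: "fvgen list \<Rightarrow> nat \<Rightarrow> int" where "kk w p = dl (passf 0 w p)"

lemma dl_passf1: "dl (passf k [h] q) = (case h of S i \<Rightarrow> if q = i then 1 else if q = i + 1 then -1 else 0 | R i \<Rightarrow> 0)"
  by (cases h) (auto simp: dl_Cons)

lemma kk_snoc: "kk (w @ [h]) p = kk w p + (case h of S i \<Rightarrow> if endpos w p = i then 1 else if endpos w p = i + 1 then -1 else 0 | R i \<Rightarrow> 0)"
  by (simp add: kk_def passf_snoc dl_passf1)


definition yw :: "nat \<Rightarrow> (nat + nat) fletter list \<Rightarrow> bool" where
  "yw n Y \<longleftrightarrow> (\<forall>l\<in>set Y. \<exists>j\<in>{1..n}. fst l = Inr j)"

definition ysum :: "'a fletter list \<Rightarrow> int" where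
  "ysum Y = sum_list (map (\<lambda>l. if snd l then -1 else 1) Y)"

lemma ysum_Nil [simp]: "ysum [] = 0" by (simp add: ysum_def)
lemma ysum_Cons: "ysum (l # Y) = (if snd l then -1 else 1) + ysum Y" by (simp add: ysum_def)
lemma ysum_append [simp]: "ysum (Y @ Z) = ysum Y + ysum Z" by (simp add: ysum_def)
lemma yw_Nil [simp]: "yw n []" by (simp add: yw_def)
lemma yw_Cons: "yw n (l # Y) \<longleftrightarrow> (\<exists>j\<in>{1..n}. fst l = Inr j) \<and> yw n Y" by (simp add: yw_def)
lemma yw_append [simp]: "yw n (Y @ Z) \<longleftrightarrow> yw n Y \<and> yw n Z" by (auto simp: yw_def)

lemma theta_Nil: "theta [] g = [(g, False)]" by (simp add: theta_def)
lemma theta_snoc: "theta (w @ [h]) g = fsubst (theta_gen h) (theta w g)" by (simp add: theta_def)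

lemma img_Inr: assumes "j \<in> {1..n}" "1 \<le> gidx h" "gidx h < n"
  shows "\<exists>j'\<in>{1..n}. img (theta_gen h) (Inr j, e) = [(Inr j', e)]"
proof (cases h)
  case (S i) then show ?thesis using assms by (auto simp: img_def finv_def)
next
  case (R i) then show ?thesis using assms swp_range[of i n j] by (auto simp: img_def finv_def)
qed

lemma yimg: assumes "yw n Y" "1 \<le> gidx h" "gidx h < n"
  shows "yw n (concat (map (img (theta_gen h)) Y)) \<and> ysum (concat (map (img (theta_gen h)) Y)) = ysum Y"
  using assms(1)
proof (induction Y)
  case Nil then show ?case by simp
next
  case (Cons l Y)
  obtain j e where l: "l = (Inr j, e)" "j \<in> {1..n}" using Cons.prems by (cases l) (auto simp: yw_Cons)
  obtain j' where j': "j' \<in> {1..n}" "img (theta_gen h) (Inr j, e) = [(Inr j', e)]"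
    using img_Inr[OF l(2) assms(2,3)] by blast
  have "yw n Y" using Cons.prems by (simp add: yw_Cons)
  then show ?case using Cons.IH j' l by (auto simp: yw_Cons ysum_Cons)
qed

lemma theta_x:
  assumes "fvb_word n w"
  shows "\<exists>Y. theta w (Inl p) = freduce ((Inl (endpos w p), False) # Y) \<and> yw n Y \<and> ysum Y = kk w p"
  using assms
proof (induction w rule: rev_induct)
  case Nil then show ?case
    by (intro exI[of _ "[]"]) (simp add: theta_Nil freduce_Cons' kk_def)
next
  case (snoc h w)
  have fw: "fvb_word n w" and h1: "1 \<le> gidx h" and h2: "gidx h < n"
    using snoc.prems by (auto simp: fvb_word_snoc)
  obtain Y where Y: "theta w (Inl p) = freduce ((Inl (endpos w p), False) # Y)" "yw n Y" "ysum Y = kk w p"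
    using snoc.IH[OF fw] by blast
  define q where "q = endpos w p"
  define Z :: "(nat + nat) fletter list" where "Z = (case h of S i \<Rightarrow> if q = i then [(Inr (i+1), False)] else if q = i+1 then [(Inr (i+1), True)] else [] | R i \<Rightarrow> [])"
  have th: "theta_gen h (Inl q) = (Inl (swp (gidx h) q), False) # Z"
    by (cases h) (auto simp: swp_def Z_def)
  have Zw: "yw n Z" using h1 h2 by (cases h) (auto simp: Z_def yw_def)
  have Zs: "kk (w @ [h]) p = kk w p + ysum Z"
    by (cases h) (auto simp: Z_def kk_snoc q_def ysum_Cons)
  define Y2 where "Y2 = concat (map (img (theta_gen h)) Y)"
  have Y2: "yw n Y2" "ysum Y2 = ysum Y" using yimg[OF Y(2) h1 h2] by (auto simp: Y2_def)
  have "theta (w @ [h]) (Inl p) = fsubst (theta_gen h) ((Inl q, False) # Y)"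
    by (simp only: theta_snoc Y(1) fsubst_freduce q_def)
  also have "\<dots> = freduce (theta_gen h (Inl q) @ freduce Y2)"
    by (simp add: fsubst_Cons img_def fsubst_img Y2_def fr_app2)
  also have "\<dots> = freduce ((Inl (endpos (w @ [h]) p), False) # (Z @ Y2))"
    using fr_app2[of "(Inl (swp (gidx h) q), False) # Z" Y2] by (simp only: th append_Cons endpos_snoc q_def[symmetric])
  finally show ?case using Zw Y2 Zs Y(3) by (intro exI[of _ "Z @ Y2"]) simp
qed

lemma theta_y:
  assumes "fvb_word n w" "p \<in> {1..n}"
  shows "\<exists>q\<in>{1..n}. theta w (Inr p) = [(Inr q, False)]"
  using assms(1)
proof (induction w rule: rev_induct)
  case Nil then show ?case using assms(2) by (simp add: theta_Nil)
next
  case (snoc h w)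
  have fw: "fvb_word n w" and h1: "1 \<le> gidx h" and h2: "gidx h < n"
    using snoc.prems by (auto simp: fvb_word_snoc)
  obtain q where q: "q \<in> {1..n}" "theta w (Inr p) = [(Inr q, False)]" using snoc.IH[OF fw] by blast
  obtain q' where q': "q' \<in> {1..n}" "img (theta_gen h) (Inr q, False) = [(Inr q', False)]"
    using img_Inr[OF q(1) h1 h2] by blast
  have "theta (w @ [h]) (Inr p) = freduce (img (theta_gen h) (Inr q, False))"
    by (simp add: theta_snoc q(2) fsubst_img)
  also have "\<dots> = [(Inr q', False)]" using q' by (simp add: freduce_Cons')
  finally show ?case using q' by blast
qed


declare freduce.simps(2)[simp del]

lemma freduce_carrier: "\<forall>l\<in>set u. fst l \<in> A \<Longrightarrow> freduce u \<in> carrier (free_group A)"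
  using set_freduce by (fastforce simp: carrier_fg)

lemma hom_comp: "h1 \<in> hom G H \<Longrightarrow> h2 \<in> hom H K \<Longrightarrow> (\<lambda>x. h2 (h1 x)) \<in> hom G K"
  by (auto simp: hom_def Pi_def)

lemma fg_Cons_freduce: "freduce (l # u) = [l] \<otimes>\<^bsub>free_group A\<^esub> freduce u"
  by (simp add: mult_fg fr_Cons2)

lemma fg_single_red: "freduce [l] = [l]"
  by (simp add: freduce_Cons')

lemma hom_ypow:
  assumes K: "group K" and h: "h \<in> hom (free_group A) K"
    and z: "\<And>l. l \<in> set Y \<Longrightarrow> fst l \<in> A \<and> h [(fst l, False)] = z" and zc: "z \<in> carrier K"
  shows "h (freduce Y) = z [^]\<^bsub>K\<^esub> ysum Y"
  using z
proof (induction Y)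
  case Nil
  interpret gh: group_hom "free_group A" K h
    by (simp add: group_hom_def group_hom_axioms_def K h fg_group)
  show ?case using gh.hom_one by (simp add: one_fg)
next
  case (Cons l Y)
  interpret gh: group_hom "free_group A" K h
    by (simp add: group_hom_def group_hom_axioms_def K h fg_group)
  interpret KK: group K by (rule K)
  obtain a e where l: "l = (a, e)" by (cases l)
  have a: "a \<in> A" and ha: "h [(a, False)] = z" using Cons.prems[of l] l by auto
  have IH: "h (freduce Y) = z [^]\<^bsub>K\<^esub> ysum Y" using Cons by simp
  have Yc: "freduce Y \<in> carrier (free_group A)"
    using Cons.prems freduce_carrier[of Y A] by auto
  have lc: "[l] \<in> carrier (free_group A)" using l a fg_gen_carrier by simp
  have "h (freduce (l # Y)) = h [l] \<otimes>\<^bsub>K\<^esub> h (freduce Y)"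
    using fg_Cons_freduce[of l Y A] lc Yc by simp
  also have "h [l] = z [^]\<^bsub>K\<^esub> (if e then -1 else 1 :: int)"
  proof (cases e)
    case True
    have "[l] = inv\<^bsub>free_group A\<^esub> [(a, False)]" using fg_inv_gen[OF a] l True by simp
    then show ?thesis using True ha fg_gen_carrier[OF a] zc by (simp add: group.int_pow_neg[OF K])
  next
    case False then show ?thesis using ha l zc by simp
  qed
  finally show ?case using IH zc l by (simp add: ysum_Cons group.int_pow_mult[OF K])
qed

lemma gl1: "group G \<Longrightarrow> x \<in> carrier G \<Longrightarrow> y \<in> carrier G \<Longrightarrow>
   (x \<otimes>\<^bsub>G\<^esub> y [^]\<^bsub>G\<^esub> (a::int)) \<otimes>\<^bsub>G\<^esub> y [^]\<^bsub>G\<^esub> (b::int) = x \<otimes>\<^bsub>G\<^esub> y [^]\<^bsub>G\<^esub> (a + b)"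
  by (simp add: group.int_pow_mult monoid.m_assoc group.is_monoid group.int_pow_closed)

lemma gl2: "group G \<Longrightarrow> x \<in> carrier G \<Longrightarrow> y \<in> carrier G \<Longrightarrow> z \<in> carrier G \<Longrightarrow>
   x = z \<otimes>\<^bsub>G\<^esub> y [^]\<^bsub>G\<^esub> (s::int) \<Longrightarrow> z = x \<otimes>\<^bsub>G\<^esub> y [^]\<^bsub>G\<^esub> (- s)"
  by (simp add: group.int_pow_neg group.inv_solve_right group.int_pow_closed)

lemma gl3: "group G \<Longrightarrow> x \<in> carrier G \<Longrightarrow> a \<in> carrier G \<Longrightarrow> x = x \<otimes>\<^bsub>G\<^esub> a \<Longrightarrow> a = \<one>\<^bsub>G\<^esub>"
  by (simp add: group.l_cancel_one')

lemma gl4: "group G \<Longrightarrow> x \<in> carrier G \<Longrightarrow> x \<otimes>\<^bsub>G\<^esub> y [^]\<^bsub>G\<^esub> (0::int) = x"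
  by (simp add: group.is_monoid monoid.r_one)

lemma pow_Gcd:
  assumes G: "group G" and y: "y \<in> carrier G" and ts: "\<forall>t\<in>set ts. y [^]\<^bsub>G\<^esub> (t::int) = \<one>\<^bsub>G\<^esub>"
  shows "y [^]\<^bsub>G\<^esub> Gcd (set ts) = \<one>\<^bsub>G\<^esub>"
  using ts
proof (induction ts)
  case Nil then show ?case by simp
next
  case (Cons t ts)
  interpret G: group G by (rule G)
  obtain u v where uv: "u * t + v * Gcd (set ts) = gcd t (Gcd (set ts))" using bezout_int by blast
  have "y [^]\<^bsub>G\<^esub> Gcd (set (t # ts)) = y [^]\<^bsub>G\<^esub> (t * u + Gcd (set ts) * v)"
    using uv by (simp add: algebra_simps)
  also have "\<dots> = (y [^]\<^bsub>G\<^esub> t) [^]\<^bsub>G\<^esub> u \<otimes>\<^bsub>G\<^esub> (y [^]\<^bsub>G\<^esub> Gcd (set ts)) [^]\<^bsub>G\<^esub> v"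
    using y by (simp add: G.int_pow_mult G.int_pow_pow)
  also have "\<dots> = \<one>\<^bsub>G\<^esub>" using Cons by simp
  finally show ?case .
qed

lemma conj_pow:
  assumes G: "group G" and x: "x \<in> carrier G" and y: "y \<in> carrier G"
  shows "x \<otimes>\<^bsub>G\<^esub> y [^]\<^bsub>G\<^esub> (a::int) \<otimes>\<^bsub>G\<^esub> y [^]\<^bsub>G\<^esub> (b::int) \<otimes>\<^bsub>G\<^esub> inv\<^bsub>G\<^esub> (x \<otimes>\<^bsub>G\<^esub> y [^]\<^bsub>G\<^esub> (c::int))
       = x \<otimes>\<^bsub>G\<^esub> y [^]\<^bsub>G\<^esub> (a + b - c) \<otimes>\<^bsub>G\<^esub> inv\<^bsub>G\<^esub> x"
proof -
  interpret G: group G by (rule G)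
  show ?thesis using x y
    by (simp add: G.inv_mult_group G.m_assoc G.int_pow_diff G.int_pow_mult)
qed

definition XP :: "nat \<Rightarrow> (nat + nat) set" where "XP m = Inl ` {..<m} \<union> {Inr 0}"
definition yP :: "(nat + nat) fletter list" where "yP = [(Inr 0, False)]"
definition Pm :: "nat \<Rightarrow> int \<Rightarrow> ((nat + nat) fletter list) set monoid" where
  "Pm m g = free_group (XP m) Mod normal_closure (free_group (XP m)) {yP [^]\<^bsub>free_group (XP m)\<^esub> g}"

lemma dl_concat_upt: "dl (concat (map h [0..<L])) = (\<Sum>j<L. dl (h j))"
  by (induction L) auto

locale bw =
  fixes n :: nat and w :: "fvgen list"
  assumes n1: "1 \<le> n" and fw: "fvb_word n w"
begin

sublocale pf "endpos w" "{1..n}" by (rule pf_endpos[OF fw])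

abbreviation "FF \<equiv> free_group (gens n)"
abbreviation "RR \<equiv> relators n w"
abbreviation "NN \<equiv> normal_closure FF RR"
abbreviation "QQ \<equiv> FF Mod NN"

lemma Fg: "group FF" by (rule fg_group)

lemma gens_Inl: "p \<in> {1..n} \<Longrightarrow> Inl p \<in> gens n" by (simp add: gens_def)
lemma gens_Inr: "p \<in> {1..n} \<Longrightarrow> Inr p \<in> gens n" by (simp add: gens_def)

lemma theta_x': assumes "p \<in> {1..n}"
  shows "\<exists>Y. theta w (Inl p) = [(Inl (endpos w p), False)] \<otimes>\<^bsub>FF\<^esub> freduce Y \<and> yw n Y \<and> ysum Y = kk w p
          \<and> theta w (Inl p) \<in> carrier FF \<and> freduce Y \<in> carrier FF"
proof -
  obtain Y where Y: "theta w (Inl p) = freduce ((Inl (endpos w p), False) # Y)" "yw n Y" "ysum Y = kk w p"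
    using theta_x[OF fw] by blast
  have ep: "endpos w p \<in> {1..n}" using endpos_range[OF fw assms] .
  have L: "\<forall>l\<in>set ((Inl (endpos w p), False) # Y). fst l \<in> gens n"
    using Y(2) ep by (auto simp: yw_def gens_def)
  have LY: "\<forall>l\<in>set Y. fst l \<in> gens n" using L by simp
  show ?thesis using Y freduce_carrier[OF L] freduce_carrier[OF LY] fg_Cons_freduce by metis
qed

lemma theta_y': assumes "p \<in> {1..n}"
  shows "\<exists>q\<in>{1..n}. theta w (Inr p) = [(Inr q, False)]"
  using theta_y[OF fw assms] .

lemma R_carrier: "RR \<subseteq> carrier FF"
proof
  fix r assume "r \<in> RR"
  then consider (x) i where "i \<in> {1..n}" "r = freduce (theta w (Inl i) @ [(Inl i, True)])"
    | (y) i where "i \<in> {1..n}" "r = freduce (theta w (Inr i) @ [(Inr i, True)])"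
    | (z) i where "i \<in> {1..n}" "r = freduce [(Inr 1, False), (Inr i, True)]"
    unfolding relators_def by blast
  then show "r \<in> carrier FF"
  proof cases
    case x
    then have "theta w (Inl i) \<in> carrier FF" using theta_x' by blast
    then have "\<forall>l\<in>set (theta w (Inl i) @ [(Inl i, True)]). fst l \<in> gens n"
      using x(1) by (auto simp: carrier_fg gens_def)
    then show ?thesis using x(2) freduce_carrier by blast
  next
    case y
    then have "\<forall>l\<in>set (theta w (Inr i) @ [(Inr i, True)]). fst l \<in> gens n"
      using theta_y'[OF y(1)] by (auto simp: gens_def)
    then show ?thesis using y(2) freduce_carrier by blast
  next
    case z
    then have "\<forall>l\<in>set [(Inr 1, False), (Inr i, True)]. fst l \<in> gens n"
      using n1 by (auto simp: gens_def)
    then show ?thesis using z(2) freduce_carrier by blast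
  qed
qed

lemma Nn: "NN \<lhd> FF" by (rule group.nc_normal[OF Fg R_carrier])

lemma Qg: "group QQ" by (rule normal.factorgroup_is_group[OF Nn])

definition cls :: "(nat + nat) fletter list \<Rightarrow> (nat + nat) fletter list set" where
  "cls u = NN #>\<^bsub>FF\<^esub> u"

lemma cls_hom: "cls \<in> hom FF QQ"
  unfolding cls_def by (rule normal.r_coset_hom_Mod[OF Nn])

lemma cls_eq: "x \<in> carrier FF \<Longrightarrow> y \<in> carrier FF \<Longrightarrow> x \<otimes>\<^bsub>FF\<^esub> inv\<^bsub>FF\<^esub> y \<in> NN \<Longrightarrow> cls x = cls y"
  unfolding cls_def using normal.coset_eq_iff[OF Nn] by blast

lemma rel_N: "r \<in> RR \<Longrightarrow> r \<in> NN"
  by (rule group.nc_incl[OF Fg R_carrier])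

definition Xc :: "nat \<Rightarrow> (nat + nat) fletter list set" where "Xc p = cls [(Inl p, False)]"
definition Yc :: "(nat + nat) fletter list set" where "Yc = cls [(Inr 1, False)]"

lemma Yc_carrier: "Yc \<in> carrier QQ"
  unfolding Yc_def using cls_hom fg_gen_carrier[OF gens_Inr[of 1]] n1 by (auto simp: hom_def Pi_def)

lemma X_carrier: "p \<in> {1..n} \<Longrightarrow> Xc p \<in> carrier QQ"
  unfolding Xc_def using cls_hom fg_gen_carrier[OF gens_Inl[of p]] by (auto simp: hom_def Pi_def)

lemma G1: assumes "j \<in> {1..n}" shows "cls [(Inr j, False)] = Yc"
proof -
  have r: "freduce [(Inr 1, False), (Inr j, True)] \<in> NN"
    using assms by (intro rel_N) (auto simp: relators_def)
  have "freduce [(Inr 1, False), (Inr j, True)] = [(Inr 1, False)] \<otimes>\<^bsub>FF\<^esub> inv\<^bsub>FF\<^esub> [(Inr j, False)]"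
    using fg_inv_gen[OF gens_Inr[OF assms]] by (simp add: mult_fg)
  then show ?thesis unfolding Yc_def using r assms n1
    by (metis cls_eq fg_gen_carrier gens_Inr atLeastAtMost_iff order_refl)
qed

lemma G2: assumes "yw n Y" shows "cls (freduce Y) = Yc [^]\<^bsub>QQ\<^esub> ysum Y"
proof (rule hom_ypow[OF Qg cls_hom _ Yc_carrier])
  fix l assume "l \<in> set Y"
  then obtain j where "j \<in> {1..n}" "fst l = Inr j" using assms by (auto simp: yw_def)
  then show "fst l \<in> gens n \<and> cls [(fst l, False)] = Yc" using G1 gens_Inr by simp
qed

lemma G3: assumes p: "p \<in> {1..n}"
  shows "Xc p = Xc (endpos w p) \<otimes>\<^bsub>QQ\<^esub> Yc [^]\<^bsub>QQ\<^esub> kk w p"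
proof -
  obtain Y where Y: "theta w (Inl p) = [(Inl (endpos w p), False)] \<otimes>\<^bsub>FF\<^esub> freduce Y" "yw n Y"
    "ysum Y = kk w p" "theta w (Inl p) \<in> carrier FF" "freduce Y \<in> carrier FF"
    using theta_x'[OF p] by blast
  have ep: "endpos w p \<in> {1..n}" using endpos_range[OF fw p] .
  have r: "freduce (theta w (Inl p) @ [(Inl p, True)]) \<in> NN"
    using p by (intro rel_N) (auto simp: relators_def)
  have "freduce (theta w (Inl p) @ [(Inl p, True)]) = theta w (Inl p) \<otimes>\<^bsub>FF\<^esub> inv\<^bsub>FF\<^esub> [(Inl p, False)]"
    using fg_inv_gen[OF gens_Inl[OF p]] by (simp add: mult_fg)
  then have "cls (theta w (Inl p)) = Xc p"
    unfolding Xc_def using r Y(4) fg_gen_carrier[OF gens_Inl[OF p]] cls_eq by metis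
  moreover have "cls (theta w (Inl p)) = Xc (endpos w p) \<otimes>\<^bsub>QQ\<^esub> cls (freduce Y)"
    unfolding Xc_def using Y(1,5) cls_hom fg_gen_carrier[OF gens_Inl[OF ep]] by (simp add: hom_mult del: mult_FactGroup one_FactGroup)
  ultimately show ?thesis using G2[OF Y(2)] Y(3) by (simp del: mult_FactGroup one_FactGroup)
qed

lemma G4: assumes r: "r \<in> {1..n}"
  shows "Xc r = Xc ((endpos w ^^ j) r) \<otimes>\<^bsub>QQ\<^esub> Yc [^]\<^bsub>QQ\<^esub> ss (kk w) r j"
proof (induction j)
  case 0
  show ?case using gl4[OF Qg X_carrier[OF r], of Yc] by (simp del: mult_FactGroup one_FactGroup)
next
  case (Suc j)
  interpret QQ: group QQ by (rule Qg)
  let ?p = "(endpos w ^^ j) r"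
  have p: "?p \<in> {1..n}" using funpow_in[OF r] .
  have ep: "endpos w ?p \<in> {1..n}" using endpos_range[OF fw p] .
  have "Xc r = (Xc (endpos w ?p) \<otimes>\<^bsub>QQ\<^esub> Yc [^]\<^bsub>QQ\<^esub> kk w ?p) \<otimes>\<^bsub>QQ\<^esub> Yc [^]\<^bsub>QQ\<^esub> ss (kk w) r j"
    using Suc G3[OF p] by (simp del: mult_FactGroup one_FactGroup)
  also have "\<dots> = Xc (endpos w ?p) \<otimes>\<^bsub>QQ\<^esub> Yc [^]\<^bsub>QQ\<^esub> (kk w ?p + ss (kk w) r j)"
    by (rule gl1[OF Qg X_carrier[OF ep] Yc_carrier])
  finally show ?case by (simp add: ss_Suc add.commute del: mult_FactGroup one_FactGroup)
qed

lemma G5: assumes p: "p \<in> {1..n}"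
  shows "Xc p = Xc (rep p) \<otimes>\<^bsub>QQ\<^esub> Yc [^]\<^bsub>QQ\<^esub> ee (kk w) p"
proof -
  interpret QQ: group QQ by (rule Qg)
  have r: "rep p \<in> {1..n}" by (rule rep_S[OF p])
  have e: "Xc (rep p) = Xc p \<otimes>\<^bsub>QQ\<^esub> Yc [^]\<^bsub>QQ\<^esub> ss (kk w) (rep p) (jj p)"
    using G4[OF r, of "jj p"] jj[OF p] by (simp del: mult_FactGroup one_FactGroup)
  show ?thesis unfolding ee_def by (rule gl2[OF Qg X_carrier[OF r] Yc_carrier X_carrier[OF p] e])
qed

lemma G6: assumes r: "r \<in> {1..n}" shows "Yc [^]\<^bsub>QQ\<^esub> ss (kk w) r (OL r) = \<one>\<^bsub>QQ\<^esub>"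
proof -
  interpret QQ: group QQ by (rule Qg)
  have "Xc r = Xc r \<otimes>\<^bsub>QQ\<^esub> Yc [^]\<^bsub>QQ\<^esub> ss (kk w) r (OL r)"
    using G4[OF r, of "OL r"] OL(2)[OF r] by (simp del: mult_FactGroup one_FactGroup)
  then show ?thesis using gl3[OF Qg X_carrier[OF r] group.int_pow_closed[OF Qg Yc_carrier]] by blast
qed

end


declare freduce.simps(2)[simp del]

lemma carrier_red: "x \<in> carrier (free_group A) \<Longrightarrow> freduce x = x"
  by (simp add: carrier_fg)

context bw
begin

definition Lr :: "nat list" where "Lr = filter (is_rep w) [1..<Suc n]"
abbreviation "m \<equiv> length Lr"
definition beta :: "nat \<Rightarrow> nat" where "beta = inv_into {..<m} ((!) Lr)"

lemma closure_eq: "closure n w = map (comp_word w) Lr" by (simp add: closure_def Lr_def)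

lemma setLr: "set Lr = {p \<in> {1..n}. is_rep w p}" by (auto simp: Lr_def)

lemma bijLr: "bij_betw ((!) Lr) {..<m} (set Lr)"
  by (rule bij_betw_nth) (auto simp: Lr_def)

lemma rep_Lr: "p \<in> {1..n} \<Longrightarrow> rep p \<in> set Lr"
  using rep_S rep_is by (auto simp: setLr is_rep_def)

lemma Lr_S: "r \<in> set Lr \<Longrightarrow> r \<in> {1..n}" by (simp add: setLr)

lemma Lr_rep: "r \<in> set Lr \<Longrightarrow> rep r = r"
  using rep_fix by (auto simp: setLr is_rep_def)

lemma beta_lt: "r \<in> set Lr \<Longrightarrow> beta r < m"
  using bij_betw_inv_into[OF bijLr] unfolding beta_def bij_betw_def by auto

lemma beta_inv: "r \<in> set Lr \<Longrightarrow> Lr ! (beta r) = r"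
  unfolding beta_def by (rule bij_betw_inv_into_right[OF bijLr])

lemma inv_beta: "c < m \<Longrightarrow> beta (Lr ! c) = c"
  unfolding beta_def using bij_betw_inv_into_left[OF bijLr] by simp

lemma nth_Lr: "c < m \<Longrightarrow> Lr ! c \<in> set Lr" by simp

definition gg :: int where "gg = Gcd (set (map dl (closure n w)))"

lemma K_eq: "dl (comp_word w r) = ss (kk w) r (OL r)"
  unfolding comp_word_def orbit_len_def OL_def ss_def kk_def dl_concat_upt by simp

lemma gg_dvd: "r \<in> set Lr \<Longrightarrow> gg dvd ss (kk w) r (OL r)"
  unfolding gg_def K_eq[symmetric] closure_eq by (rule Gcd_dvd) simp

lemma Yc_gg: "Yc [^]\<^bsub>QQ\<^esub> gg = \<one>\<^bsub>QQ\<^esub>"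
  unfolding gg_def
proof (rule pow_Gcd[OF Qg Yc_carrier])
  show "\<forall>t\<in>set (map dl (closure n w)). Yc [^]\<^bsub>QQ\<^esub> t = \<one>\<^bsub>QQ\<^esub>"
    using G6 Lr_S by (auto simp: closure_eq K_eq)
qed

abbreviation "FP \<equiv> free_group (XP m)"
abbreviation "MM \<equiv> normal_closure FP {yP [^]\<^bsub>FP\<^esub> gg}"

lemma FPg: "group FP" by (rule fg_group)

lemma yP_c: "yP \<in> carrier FP" unfolding yP_def by (rule fg_gen_carrier) (simp add: XP_def)

lemma xP_c: "c < m \<Longrightarrow> [(Inl c, False)] \<in> carrier FP" by (rule fg_gen_carrier) (simp add: XP_def)

lemma ygg_c: "{yP [^]\<^bsub>FP\<^esub> gg} \<subseteq> carrier FP" using group.int_pow_closed[OF FPg yP_c] by simp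

lemma Mn: "MM \<lhd> FP" by (rule group.nc_normal[OF FPg ygg_c])

definition phi :: "nat + nat \<Rightarrow> (nat + nat) fletter list" where
  "phi a = (case a of Inl p \<Rightarrow> [(Inl (beta (rep p)), False)] \<otimes>\<^bsub>FP\<^esub> yP [^]\<^bsub>FP\<^esub> ee (kk w) p | Inr j \<Rightarrow> yP)"

definition psi :: "nat + nat \<Rightarrow> (nat + nat) fletter list" where
  "psi a = (case a of Inl c \<Rightarrow> [(Inl (Lr ! c), False)] | Inr j \<Rightarrow> [(Inr 1, False)])"

lemma xc_c: "p \<in> {1..n} \<Longrightarrow> [(Inl (beta (rep p)), False)] \<in> carrier FP"
  by (rule xP_c[OF beta_lt[OF rep_Lr]])

lemma phi_c: "a \<in> gens n \<Longrightarrow> phi a \<in> carrier FP"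
  using xc_c yP_c FPg by (auto simp: gens_def phi_def group.int_pow_closed monoid.m_closed group.is_monoid)

lemma psi_c: "a \<in> XP m \<Longrightarrow> psi a \<in> carrier FF"
  using n1 Lr_S nth_Lr by (auto simp: XP_def psi_def intro!: fg_gen_carrier simp: gens_def)

lemma Phi_hom: "fsubst phi \<in> hom FF FP" by (rule fsubst_hom[OF phi_c])
lemma Psi_hom: "fsubst psi \<in> hom FP FF" by (rule fsubst_hom[OF psi_c])

lemma Phi_gen: "a \<in> gens n \<Longrightarrow> fsubst phi [(a, False)] = phi a"
  by (simp add: fsubst_single carrier_red[OF phi_c])
lemma Psi_gen: "a \<in> XP m \<Longrightarrow> fsubst psi [(a, False)] = psi a"
  by (simp add: fsubst_single carrier_red[OF psi_c])

lemma Phi_theta: assumes p: "p \<in> {1..n}"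
  shows "fsubst phi (theta w (Inl p)) = phi (Inl (endpos w p)) \<otimes>\<^bsub>FP\<^esub> yP [^]\<^bsub>FP\<^esub> kk w p"
proof -
  obtain Y where Y: "theta w (Inl p) = [(Inl (endpos w p), False)] \<otimes>\<^bsub>FF\<^esub> freduce Y" "yw n Y"
    "ysum Y = kk w p" "theta w (Inl p) \<in> carrier FF" "freduce Y \<in> carrier FF"
    using theta_x'[OF p] by blast
  have ep: "endpos w p \<in> {1..n}" using endpos_range[OF fw p] .
  have "fsubst phi (freduce Y) = yP [^]\<^bsub>FP\<^esub> ysum Y"
  proof (rule hom_ypow[OF FPg Phi_hom _ yP_c])
    fix l assume "l \<in> set Y"
    then obtain j where "j \<in> {1..n}" "fst l = Inr j" using Y(2) by (auto simp: yw_def)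
    then show "fst l \<in> gens n \<and> fsubst phi [(fst l, False)] = yP"
      using gens_Inr Phi_gen by (simp add: phi_def)
  qed
  then show ?thesis using Y hom_mult[OF Phi_hom] fg_gen_carrier[OF gens_Inl[OF ep]] Phi_gen[OF gens_Inl[OF ep]]
    by simp
qed

lemma PhiR: "r \<in> RR \<Longrightarrow> fsubst phi r \<in> MM"
proof -
  interpret FP: group FP by (rule FPg)
  interpret MM: normal MM FP by (rule Mn)
  have one: "\<And>j k. j \<in> {1..n} \<Longrightarrow> k \<in> {1..n} \<Longrightarrow>
      fsubst phi (freduce [(Inr j, False), (Inr k, True)]) \<in> MM"
  proof -
    fix j k assume j: "j \<in> {1..n}" and k: "k \<in> {1..n}"
    have "freduce [(Inr j, False), (Inr k, True)] = [(Inr j, False)] \<otimes>\<^bsub>FF\<^esub> inv\<^bsub>FF\<^esub> [(Inr k, False)]"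
      using fg_inv_gen[OF gens_Inr[OF k]] by (simp add: mult_fg)
    then have "fsubst phi (freduce [(Inr j, False), (Inr k, True)]) = yP \<otimes>\<^bsub>FP\<^esub> inv\<^bsub>FP\<^esub> yP"
      using Phi_gen[OF gens_Inr[OF j]] Phi_gen[OF gens_Inr[OF k]] hom_mult[OF Phi_hom]
        group_hom.hom_inv[of FF FP "fsubst phi"] Phi_hom Fg FPg
        fg_gen_carrier[OF gens_Inr[OF j]] fg_gen_carrier[OF gens_Inr[OF k]]
      by (simp add: phi_def group_hom_def group_hom_axioms_def)
    then show "fsubst phi (freduce [(Inr j, False), (Inr k, True)]) \<in> MM"
      using yP_c by (simp add: MM.one_closed)
  qed
  assume "r \<in> RR"
  then consider (x) i where "i \<in> {1..n}" "r = freduce (theta w (Inl i) @ [(Inl i, True)])"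
    | (y) i where "i \<in> {1..n}" "r = freduce (theta w (Inr i) @ [(Inr i, True)])"
    | (z) i where "i \<in> {1..n}" "r = freduce [(Inr 1, False), (Inr i, True)]"
    unfolding relators_def by blast
  then show ?thesis
  proof cases
    case x
    let ?q = "endpos w i"
    let ?xc = "[(Inl (beta (rep i)), False)]"
    have ep: "?q \<in> {1..n}" using endpos_range[OF fw x(1)] .
    have thc: "theta w (Inl i) \<in> carrier FF" using theta_x'[OF x(1)] by blast
    have "r = theta w (Inl i) \<otimes>\<^bsub>FF\<^esub> inv\<^bsub>FF\<^esub> [(Inl i, False)]"
      using x(2) fg_inv_gen[OF gens_Inl[OF x(1)]] by (simp add: mult_fg)
    then have "fsubst phi r = fsubst phi (theta w (Inl i)) \<otimes>\<^bsub>FP\<^esub> inv\<^bsub>FP\<^esub> phi (Inl i)"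
      using hom_mult[OF Phi_hom] group_hom.hom_inv[of FF FP "fsubst phi"] Phi_hom Fg FPg thc
        fg_gen_carrier[OF gens_Inl[OF x(1)]] Phi_gen[OF gens_Inl[OF x(1)]]
      by (simp add: group_hom_def group_hom_axioms_def)
    also have "\<dots> = (?xc \<otimes>\<^bsub>FP\<^esub> yP [^]\<^bsub>FP\<^esub> ee (kk w) ?q \<otimes>\<^bsub>FP\<^esub> yP [^]\<^bsub>FP\<^esub> kk w i)
        \<otimes>\<^bsub>FP\<^esub> inv\<^bsub>FP\<^esub> (?xc \<otimes>\<^bsub>FP\<^esub> yP [^]\<^bsub>FP\<^esub> ee (kk w) i)"
      using Phi_theta[OF x(1)] rep_f[OF x(1)] by (simp add: phi_def)
    also have "\<dots> = ?xc \<otimes>\<^bsub>FP\<^esub> yP [^]\<^bsub>FP\<^esub> (ee (kk w) ?q + kk w i - ee (kk w) i) \<otimes>\<^bsub>FP\<^esub> inv\<^bsub>FP\<^esub> ?xc"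
      by (rule conj_pow[OF FPg xc_c[OF x(1)] yP_c])
    finally have e: "fsubst phi r = ?xc \<otimes>\<^bsub>FP\<^esub> yP [^]\<^bsub>FP\<^esub> (ee (kk w) ?q + kk w i - ee (kk w) i) \<otimes>\<^bsub>FP\<^esub> inv\<^bsub>FP\<^esub> ?xc" .
    have d1: "ss (kk w) (rep i) (OL (rep i)) dvd (ee (kk w) ?q + kk w i - ee (kk w) i)"
      by (rule ee_step[OF x(1)])
    have d2: "gg dvd ss (kk w) (rep i) (OL (rep i))" by (rule gg_dvd[OF rep_Lr[OF x(1)]])
    obtain t where t: "ee (kk w) ?q + kk w i - ee (kk w) i = gg * t"
      using dvd_trans[OF d2 d1] by (auto simp: dvd_def)
    have "yP [^]\<^bsub>FP\<^esub> gg \<in> MM" using group.nc_incl[OF FPg ygg_c] by simp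
    then have "(yP [^]\<^bsub>FP\<^esub> gg) [^]\<^bsub>FP\<^esub> t \<in> MM"
      by (rule FP.subgroup_int_pow_closed[OF MM.subgroup_axioms])
    then have "yP [^]\<^bsub>FP\<^esub> (ee (kk w) ?q + kk w i - ee (kk w) i) \<in> MM"
      using t yP_c by (simp add: FP.int_pow_pow)
    then show ?thesis using e MM.inv_op_closed2[OF xc_c[OF x(1)]] by simp
  next
    case y
    obtain q where q: "q \<in> {1..n}" "theta w (Inr i) = [(Inr q, False)]" using theta_y'[OF y(1)] by blast
    show ?thesis using one[OF q(1) y(1)] y(2) q(2) by simp
  next
    case z
    show ?thesis using one[OF _ z(1)] z(2) n1 by simp
  qed
qed

lemma PhiN: "x \<in> NN \<Longrightarrow> fsubst phi x \<in> MM"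
  by (rule nc_hom[OF Fg FPg Phi_hom Mn R_carrier PhiR])

lemma PsiM: "y \<in> MM \<Longrightarrow> fsubst psi y \<in> NN"
proof (rule nc_hom[OF FPg Fg Psi_hom Nn ygg_c])
  fix a assume "a \<in> {yP [^]\<^bsub>FP\<^esub> gg}"
  then have a: "a = yP [^]\<^bsub>FP\<^esub> gg" by simp
  have c1: "[(Inr 1, False)] \<in> carrier FF" using fg_gen_carrier[OF gens_Inr[of 1]] n1 by simp
  have "fsubst psi a = [(Inr 1, False)] [^]\<^bsub>FF\<^esub> gg"
    using a hom_int_pow[OF Psi_hom yP_c FPg Fg] Psi_gen[of "Inr 0"] by (simp add: yP_def XP_def psi_def)
  moreover have "cls ([(Inr 1, False)] [^]\<^bsub>FF\<^esub> gg) = NN"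
    using hom_int_pow[OF cls_hom c1 Fg Qg] Yc_gg by (simp add: Yc_def)
  moreover have "[(Inr 1, False)] [^]\<^bsub>FF\<^esub> gg \<in> carrier FF" using c1 group.int_pow_closed[OF Fg] by simp
  ultimately show "fsubst psi a \<in> NN" using normal.coset_one_iff[OF Nn] by (simp add: cls_def)
qed

lemma id1: "x \<in> carrier FF \<Longrightarrow> NN #>\<^bsub>FF\<^esub> fsubst psi (fsubst phi x) = NN #>\<^bsub>FF\<^esub> x"
proof -
  assume x: "x \<in> carrier FF"
  have h1: "(\<lambda>x. cls (fsubst psi (fsubst phi x))) \<in> hom FF QQ"
    by (rule hom_comp[OF hom_comp[OF Phi_hom Psi_hom] cls_hom])
  have "cls (fsubst psi (fsubst phi x)) = cls x"
  proof (rule fg_hom_agree[OF h1 cls_hom Qg _ x])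
    fix a assume a: "a \<in> gens n"
    show "cls (fsubst psi (fsubst phi [(a, False)])) = cls [(a, False)]"
    proof (cases a)
      case (Inl p)
      then have p: "p \<in> {1..n}" using a by (auto simp: gens_def)
      have r: "rep p \<in> set Lr" by (rule rep_Lr[OF p])
      have "fsubst psi (fsubst phi [(a, False)])
          = fsubst psi [(Inl (beta (rep p)), False)] \<otimes>\<^bsub>FF\<^esub> (fsubst psi yP) [^]\<^bsub>FF\<^esub> ee (kk w) p"
        using Phi_gen[OF a] Inl hom_mult[OF Psi_hom] xc_c[OF p] yP_c hom_int_pow[OF Psi_hom yP_c FPg Fg]
          group.int_pow_closed[OF FPg yP_c]
        by (simp add: phi_def)
      also have "\<dots> = [(Inl (rep p), False)] \<otimes>\<^bsub>FF\<^esub> [(Inr 1, False)] [^]\<^bsub>FF\<^esub> ee (kk w) p"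
        using Psi_gen[of "Inl (beta (rep p))"] Psi_gen[of "Inr 0"] beta_lt[OF r] beta_inv[OF r]
        by (simp add: XP_def psi_def yP_def)
      finally have e: "fsubst psi (fsubst phi [(a, False)]) = [(Inl (rep p), False)] \<otimes>\<^bsub>FF\<^esub> [(Inr 1, False)] [^]\<^bsub>FF\<^esub> ee (kk w) p" .
      have c1: "[(Inr 1, False)] \<in> carrier FF" using fg_gen_carrier[OF gens_Inr[of 1]] n1 by simp
      have c2: "[(Inl (rep p), False)] \<in> carrier FF" using fg_gen_carrier[OF gens_Inl[OF rep_S[OF p]]] .
      have "cls (fsubst psi (fsubst phi [(a, False)])) = Xc (rep p) \<otimes>\<^bsub>QQ\<^esub> Yc [^]\<^bsub>QQ\<^esub> ee (kk w) p"
        unfolding e Xc_def Yc_def using hom_mult[OF cls_hom c2] hom_int_pow[OF cls_hom c1 Fg Qg]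
          group.int_pow_closed[OF Fg c1] by simp
      also have "\<dots> = Xc p" by (rule G5[OF p, symmetric])
      finally show ?thesis by (simp add: Xc_def Inl)
    next
      case (Inr j)
      then have j: "j \<in> {1..n}" using a by (auto simp: gens_def)
      have "fsubst psi (fsubst phi [(a, False)]) = [(Inr 1, False)]"
        using Phi_gen[OF a] Inr Psi_gen[of "Inr 0"] by (simp add: phi_def yP_def XP_def psi_def)
      then show ?thesis using G1[OF j] Inr by (simp add: Yc_def)
    qed
  qed
  then show ?thesis by (simp add: cls_def)
qed

lemma id2: "y \<in> carrier FP \<Longrightarrow> MM #>\<^bsub>FP\<^esub> fsubst phi (fsubst psi y) = MM #>\<^bsub>FP\<^esub> y"
proof -
  assume y: "y \<in> carrier FP"
  have h1: "(\<lambda>y. MM #>\<^bsub>FP\<^esub> fsubst phi (fsubst psi y)) \<in> hom FP (FP Mod MM)"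
    by (rule quot_hom[OF FPg FPg Mn hom_comp[OF Psi_hom Phi_hom]])
  have h2: "(\<lambda>y. MM #>\<^bsub>FP\<^esub> y) \<in> hom FP (FP Mod MM)" by (rule normal.r_coset_hom_Mod[OF Mn])
  show ?thesis
  proof (rule fg_hom_agree[OF h1 h2 normal.factorgroup_is_group[OF Mn] _ y])
    fix a assume a: "a \<in> XP m"
    show "MM #>\<^bsub>FP\<^esub> fsubst phi (fsubst psi [(a, False)]) = MM #>\<^bsub>FP\<^esub> [(a, False)]"
    proof (cases a)
      case (Inl c)
      then have c: "c < m" using a by (auto simp: XP_def)
      have r: "Lr ! c \<in> set Lr" using c by simp
      have "fsubst phi (fsubst psi [(a, False)]) = phi (Inl (Lr ! c))"
        using Psi_gen[OF a] Inl Phi_gen[OF gens_Inl[OF Lr_S[OF r]]] by (simp add: psi_def)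
      also have "\<dots> = [(Inl c, False)]"
        using Lr_rep[OF r] inv_beta[OF c] ee_rep[OF Lr_S[OF r] Lr_rep[OF r]] gl4[OF FPg xP_c[OF c]]
        by (simp add: phi_def)
      finally show ?thesis using Inl by simp
    next
      case (Inr j)
      then have "a = Inr 0" using a by (auto simp: XP_def)
      then have "fsubst phi (fsubst psi [(a, False)]) = yP"
        using Psi_gen[OF a] Phi_gen[OF gens_Inr[of 1]] n1 by (simp add: psi_def phi_def)
      then show ?thesis using \<open>a = Inr 0\<close> by (simp add: yP_def)
    qed
  qed
qed

theorem Gb_iso: "Gb n w \<cong> Pm (length (closure n w)) (Gcd (set (map dl (closure n w))))"
proof -
  have "FF Mod NN \<cong> FP Mod MM"
    by (rule tietze[OF Fg FPg Nn Mn Phi_hom Psi_hom PhiN PsiM id1 id2])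
  moreover have e1: "length (closure n w) = m" by (simp add: closure_eq)
  moreover have e2: "Gcd (set (map dl (closure n w))) = gg" by (simp only: gg_def)
  ultimately show ?thesis unfolding Gb_def Pm_def by (simp only:)
qed

end

theorem main_iso:
  assumes "1 \<le> n" "fvb_word n w"
  shows "Gb n w \<cong> Pm (length (closure n w)) (Gcd (set (map dl (closure n w))))"
proof -
  interpret bw n w using assms by unfold_locales
  show ?thesis by (rule Gb_iso)
qed

theorem theorem8:
  fixes n n' :: nat and w w' :: "fvgen list"
  assumes "1 \<le> n" and "1 \<le> n'"
    and "fvb_word n w" and "fvb_word n' w'"
    and "flat_equiv (closure n w) (closure n' w')"
  shows "Gb n w \<cong> Gb n' w'"
proof -
  have ms: "mset (map dl (closure n w)) = mset (map dl (closure n' w'))"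
    by (rule flat_equiv_inv[OF assms(5)])
  then have len: "length (closure n w) = length (closure n' w')"
    by (metis length_map size_mset)
  from ms have st: "set (map dl (closure n w)) = set (map dl (closure n' w'))"
    by (metis set_mset_mset)
  have i1: "Gb n w \<cong> Pm (length (closure n w)) (Gcd (set (map dl (closure n w))))"
    by (rule main_iso[OF assms(1,3)])
  have i2: "Gb n' w' \<cong> Pm (length (closure n w)) (Gcd (set (map dl (closure n w))))"
    using main_iso[OF assms(2,4)] len st by simp
  interpret b2: bw n' w' using assms by unfold_locales
  have i3: "Pm (length (closure n w)) (Gcd (set (map dl (closure n w)))) \<cong> Gb n' w'"
    using group.iso_sym[OF b2.Qg i2[unfolded Gb_def]] by (simp only: Gb_def)
  show ?thesis by (rule iso_trans[OF i1 i3])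
qed


end
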